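(* Let $n\equiv 0\pmod 4$. Then the set $$\{h,\ x_n,x_{n-1},\ldots,x_{\frac n2+4},x_{\frac n2+3},\ x_{\frac n2+2}x_{\frac n2}\cdots x_6x_4,\ x_{\frac n2+1}x_{\frac n2-1}\cdots x_5x_3\}$$ is a generating set of $\mathcal{AM}_n$ of minimum size. In particular, $\mathcal{AM}_n$ has rank $\frac n2+1$.
   Context: Let $\Omega_n=\{1<2<\cdots<n\}$ and $\mathcal{I}_n$ the monoid of all partial injective maps of $\Omega_n$, written on the right and composed left to right ($x(\alpha\beta)=(x\alpha)\beta$). $\mathcal{AI}_n$ is the set of all $\alpha\in\mathcal{I}_n$ with $\alpha=\sigma|_{\mathrm{Dom}(\alpha)}$ for some even permutation $\sigma$; $\mathcal{PMI}_n$ is the set of monotone (order-preserving or order-reversing) elements and $\mathcal{AM}_n=\mathcal{AI}_n\cap\mathcal{PMI}_n$. The rank of a monoid is the minimum size of a generating set. $h$ is the permutation $i\mapsto n+1-i$. Let $X_i=\Omega_n\setminus\{i\}$. Define $x_1,\dots,x_n$ as the (unique) order-preserving partial permutations with: $x_1$: domain $X_1$, image $X_n$ if $n$ is odd and $X_{n-1}$ if $n$ is even; $x_2$: domain $X_2$, image $X_{n-1}$ if $n$ is odd and $X_n$ if $n$ is even; $x_i$ ($3\leqslant i\leqslant n$): domain $X_i$, image $X_{i-2}$. The list $x_n,\dots,x_{\frac n2+3}$ is empty if $\frac n2+3>n$. *)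

theory Defs
  imports "HOL-Combinatorics.Permutations"
begin

text \<open>Partial maps of the chain 1 < 2 < ... < n are represented as maps
  nat => nat option whose domain is contained in {1..n}.\<close>

definition Omega :: "nat \<Rightarrow> nat set" where
  "Omega n = {1..n}"

definition PI :: "nat \<Rightarrow> (nat \<Rightarrow> nat option) set" where
  "PI n = {a. dom a \<subseteq> Omega n \<and> ran a \<subseteq> Omega n \<and> inj_on a (dom a)}"

text \<open>Composition written on the right: x (a b) = (x a) b.\<close>
definition pcomp :: "(nat \<Rightarrow> nat option) \<Rightarrow> (nat \<Rightarrow> nat option) \<Rightarrow> (nat \<Rightarrow> nat option)" where
  "pcomp a b = (\<lambda>x. case a x of None \<Rightarrow> None | Some y \<Rightarrow> b y)"

definition pid :: "nat \<Rightarrow> (nat \<Rightarrow> nat option)" where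
  "pid n = (\<lambda>x. if x \<in> Omega n then Some x else None)"

definition AI :: "nat \<Rightarrow> (nat \<Rightarrow> nat option) set" where
  "AI n = {a \<in> PI n. \<exists>\<sigma>. \<sigma> permutes Omega n \<and> evenperm \<sigma> \<and>
                          (\<forall>x \<in> dom a. a x = Some (\<sigma> x))}"

definition order_preserving :: "(nat \<Rightarrow> nat option) \<Rightarrow> bool" where
  "order_preserving a = (\<forall>x \<in> dom a. \<forall>y \<in> dom a. x \<le> y \<longrightarrow> the (a x) \<le> the (a y))"

definition order_reversing :: "(nat \<Rightarrow> nat option) \<Rightarrow> bool" where
  "order_reversing a = (\<forall>x \<in> dom a. \<forall>y \<in> dom a. x \<le> y \<longrightarrow> the (a y) \<le> the (a x))"

definition PMI :: "nat \<Rightarrow> (nat \<Rightarrow> nat option) set" where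
  "PMI n = {a \<in> PI n. order_preserving a \<or> order_reversing a}"

definition AM :: "nat \<Rightarrow> (nat \<Rightarrow> nat option) set" where
  "AM n = AI n \<inter> PMI n"

inductive_set gen :: "nat \<Rightarrow> (nat \<Rightarrow> nat option) set \<Rightarrow> (nat \<Rightarrow> nat option) set"
  for n A where
  gen_id: "pid n \<in> gen n A"
| gen_base: "a \<in> A \<Longrightarrow> a \<in> gen n A"
| gen_comp: "a \<in> gen n A \<Longrightarrow> b \<in> gen n A \<Longrightarrow> pcomp a b \<in> gen n A"

definition rank :: "nat \<Rightarrow> (nat \<Rightarrow> nat option) set \<Rightarrow> nat" where
  "rank n M = (LEAST k. \<exists>A. A \<subseteq> M \<and> finite A \<and> card A = k \<and> gen n A = M)"

definition hmap :: "nat \<Rightarrow> (nat \<Rightarrow> nat option)" where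
  "hmap n = (\<lambda>x. if x \<in> Omega n then Some (n + 1 - x) else None)"

text \<open>The unique order-preserving partial permutation with domain
  Omega n - {i} and image Omega n - {j}.\<close>
definition opb :: "nat \<Rightarrow> nat \<Rightarrow> nat \<Rightarrow> (nat \<Rightarrow> nat option)" where
  "opb n i j = (\<lambda>k. if k \<in> Omega n - {i} then
                      (let r = (if k < i then k else k - 1) in Some (if r < j then r else r + 1))
                    else None)"

definition xgen :: "nat \<Rightarrow> nat \<Rightarrow> (nat \<Rightarrow> nat option)" where
  "xgen n i = (if i = 1 then opb n 1 (if odd n then n else n - 1)
               else if i = 2 then opb n 2 (if odd n then n - 1 else n)
               else opb n i (i - 2))"

definition lprod :: "nat \<Rightarrow> (nat \<Rightarrow> nat option) list \<Rightarrow> (nat \<Rightarrow> nat option)" where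
  "lprod n as = foldl pcomp (pid n) as"

end

theory Submission
  imports Defs
begin


definition pidS :: "nat set \<Rightarrow> (nat \<Rightarrow> nat option)" where
  "pidS D = (\<lambda>x. if x \<in> D then Some x else None)"

lemma pid_pidS: "pid n = pidS (Omega n)"
  by (simp add: pid_def pidS_def)

lemma pcomp_assoc: "pcomp (pcomp a b) c = pcomp a (pcomp b c)"
  by (auto simp: pcomp_def fun_eq_iff split: option.splits)

lemma pcomp_pid_left: "dom a \<subseteq> Omega n \<Longrightarrow> pcomp (pid n) a = a"
proof (rule ext)
  fix x assume d: "dom a \<subseteq> Omega n"
  show "pcomp (pid n) a x = a x"
  proof (cases "x \<in> Omega n")
    case False
    hence "a x = None" using d by auto
    thus ?thesis using False by (simp add: pcomp_def pid_def)
  qed (simp add: pcomp_def pid_def)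
qed

lemma pcomp_pid_right: "ran a \<subseteq> Omega n \<Longrightarrow> pcomp a (pid n) = a"
  by (auto simp: pcomp_def pid_def fun_eq_iff ran_def split: option.splits)

lemma dom_pcomp: "dom (pcomp a b) = {x \<in> dom a. the (a x) \<in> dom b}"
  by (auto simp: pcomp_def dom_def split: option.splits)

lemma pcomp_Some: "pcomp a b x = Some z \<longleftrightarrow> (\<exists>y. a x = Some y \<and> b y = Some z)"
  by (auto simp: pcomp_def split: option.splits)

lemma ran_pcomp: "ran (pcomp a b) \<subseteq> ran b"
  by (auto simp: ran_def pcomp_Some)

lemma PI_pcomp: "a \<in> PI n \<Longrightarrow> b \<in> PI n \<Longrightarrow> pcomp a b \<in> PI n"
  unfolding PI_def
proof (intro CollectI conjI)
  assume a: "a \<in> {a. dom a \<subseteq> Omega n \<and> ran a \<subseteq> Omega n \<and> inj_on a (dom a)}"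
     and b: "b \<in> {a. dom a \<subseteq> Omega n \<and> ran a \<subseteq> Omega n \<and> inj_on a (dom a)}"
  show "dom (pcomp a b) \<subseteq> Omega n" using a by (auto simp: dom_pcomp)
  show "ran (pcomp a b) \<subseteq> Omega n" using b ran_pcomp by blast
  show "inj_on (pcomp a b) (dom (pcomp a b))"
  proof (rule inj_onI)
    fix x y assume x: "x \<in> dom (pcomp a b)" and y: "y \<in> dom (pcomp a b)" and e: "pcomp a b x = pcomp a b y"
    have "x \<in> dom a" "the (a x) \<in> dom b" using x by (auto simp: dom_pcomp)
    then obtain u where u: "a x = Some u" "u \<in> dom b" by (metis domD option.sel)
    have "y \<in> dom a" "the (a y) \<in> dom b" using y by (auto simp: dom_pcomp)
    then obtain v where v: "a y = Some v" "v \<in> dom b" by (metis domD option.sel)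
    have "b u = b v" using e u v by (simp add: pcomp_def)
    hence "u = v" using b u v by (auto dest: inj_onD)
    hence "a x = a y" using u v by simp
    moreover have ia: "inj_on a (dom a)" using a by simp
    ultimately show "x = y" using u v by (meson domI inj_onD)
  qed
qed

definition sop :: "(nat \<Rightarrow> nat option) \<Rightarrow> bool" where
  "sop a = (\<forall>x \<in> dom a. \<forall>y \<in> dom a. x < y \<longrightarrow> the (a x) < the (a y))"
definition srev :: "(nat \<Rightarrow> nat option) \<Rightarrow> bool" where
  "srev a = (\<forall>x \<in> dom a. \<forall>y \<in> dom a. x < y \<longrightarrow> the (a y) < the (a x))"

lemma inj_the: "inj_on a (dom a) \<Longrightarrow> x \<in> dom a \<Longrightarrow> y \<in> dom a \<Longrightarrow> x \<noteq> y \<Longrightarrow> the (a x) \<noteq> the (a y)"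
  by (metis domD inj_onD option.sel)

lemma op_sop: "inj_on a (dom a) \<Longrightarrow> order_preserving a \<Longrightarrow> sop a"
  unfolding order_preserving_def sop_def
proof (intro ballI impI)
  fix x y assume i: "inj_on a (dom a)" and h: "\<forall>x\<in>dom a. \<forall>y\<in>dom a. x \<le> y \<longrightarrow> the (a x) \<le> the (a y)"
    and xy: "x \<in> dom a" "y \<in> dom a" "x < y"
  have 1: "the (a x) \<le> the (a y)" using h xy by auto
  have "the (a x) \<noteq> the (a y)" using inj_the[OF i xy(1,2)] xy(3) by simp
  with 1 show "the (a x) < the (a y)" by simp
qed
lemma sop_op: "sop a \<Longrightarrow> order_preserving a"
  unfolding order_preserving_def sop_def
  by (metis eq_iff le_neq_implies_less less_imp_le_nat)
lemma or_srev: "inj_on a (dom a) \<Longrightarrow> order_reversing a \<Longrightarrow> srev a"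
  unfolding order_reversing_def srev_def
proof (intro ballI impI)
  fix x y assume i: "inj_on a (dom a)" and h: "\<forall>x\<in>dom a. \<forall>y\<in>dom a. x \<le> y \<longrightarrow> the (a y) \<le> the (a x)"
    and xy: "x \<in> dom a" "y \<in> dom a" "x < y"
  have 1: "the (a y) \<le> the (a x)" using h xy by auto
  have "the (a x) \<noteq> the (a y)" using inj_the[OF i xy(1,2)] xy(3) by simp
  with 1 show "the (a y) < the (a x)" by simp
qed
lemma srev_or: "srev a \<Longrightarrow> order_reversing a"
  unfolding order_reversing_def srev_def
  by (metis eq_iff le_neq_implies_less less_imp_le_nat)

lemma pcomp_the: "x \<in> dom (pcomp a b) \<Longrightarrow> the (pcomp a b x) = the (b (the (a x)))"
  by (auto simp: pcomp_def split: option.splits)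

lemma sop_pcomp: "sop a \<Longrightarrow> sop b \<Longrightarrow> sop (pcomp a b)"
  unfolding sop_def by (simp add: dom_pcomp pcomp_the)
lemma srev_pcomp1: "srev a \<Longrightarrow> srev b \<Longrightarrow> sop (pcomp a b)"
  unfolding sop_def srev_def by (simp add: dom_pcomp pcomp_the)
lemma srev_pcomp2: "sop a \<Longrightarrow> srev b \<Longrightarrow> srev (pcomp a b)"
  unfolding sop_def srev_def by (simp add: dom_pcomp pcomp_the)
lemma srev_pcomp3: "srev a \<Longrightarrow> sop b \<Longrightarrow> srev (pcomp a b)"
  unfolding sop_def srev_def by (simp add: dom_pcomp pcomp_the)

lemma PI_inj: "a \<in> PI n \<Longrightarrow> inj_on a (dom a)" by (simp add: PI_def)

lemma PMI_pcomp: "a \<in> PMI n \<Longrightarrow> b \<in> PMI n \<Longrightarrow> pcomp a b \<in> PMI n"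
  unfolding PMI_def using PI_pcomp PI_inj op_sop or_srev sop_op srev_or
    sop_pcomp srev_pcomp1 srev_pcomp2 srev_pcomp3 by (metis (no_types, lifting) mem_Collect_eq)

lemma finite_Omega[simp]: "finite (Omega n)" by (simp add: Omega_def)

lemma AI_pcomp: "a \<in> AI n \<Longrightarrow> b \<in> AI n \<Longrightarrow> pcomp a b \<in> AI n"
proof -
  assume a: "a \<in> AI n" and b: "b \<in> AI n"
  then obtain s t where s: "s permutes Omega n" "evenperm s" "\<forall>x\<in>dom a. a x = Some (s x)"
    and t: "t permutes Omega n" "evenperm t" "\<forall>x\<in>dom b. b x = Some (t x)"
    unfolding AI_def by blast
  have "t \<circ> s permutes Omega n" using s t by (simp add: permutes_compose)
  moreover have "evenperm (t \<circ> s)"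
    using s t by (simp add: evenperm_comp permutes_imp_permutation[OF finite_Omega])
  moreover have "\<forall>x\<in>dom (pcomp a b). pcomp a b x = Some ((t \<circ> s) x)"
  proof
    fix x assume "x \<in> dom (pcomp a b)"
    hence "x \<in> dom a" "the (a x) \<in> dom b" by (auto simp: dom_pcomp)
    thus "pcomp a b x = Some ((t \<circ> s) x)" using s(3) t(3) by (auto simp: pcomp_def)
  qed
  moreover have "pcomp a b \<in> PI n" using a b PI_pcomp by (auto simp: AI_def)
  ultimately show ?thesis unfolding AI_def by blast
qed

lemma AM_pcomp: "a \<in> AM n \<Longrightarrow> b \<in> AM n \<Longrightarrow> pcomp a b \<in> AM n"
  unfolding AM_def using AI_pcomp PMI_pcomp by blast

lemma pid_AM: "pid n \<in> AM n"
proof -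
  have "pid n \<in> PI n" by (auto simp: PI_def pid_def dom_def ran_def inj_on_def split: if_splits)
  moreover have "sop (pid n)" by (auto simp: sop_def pid_def dom_def split: if_splits)
  moreover have "\<forall>x\<in>dom (pid n). pid n x = Some (id x)" by (auto simp: pid_def split: if_splits)
  ultimately show ?thesis unfolding AM_def AI_def PMI_def
    using permutes_id evenperm_id sop_op by blast
qed

lemma gen_sub_AM: "A \<subseteq> AM n \<Longrightarrow> gen n A \<subseteq> AM n"
proof
  fix x assume A: "A \<subseteq> AM n" and "x \<in> gen n A"
  from this(2) show "x \<in> AM n" by induction (use A in \<open>auto simp: pid_AM AM_pcomp\<close>)
qed



definition ov :: "nat \<Rightarrow> nat \<Rightarrow> nat \<Rightarrow> nat" where
  "ov i j x = (let r = (if x < i then x else x - 1) in if r < j then r else r + 1)"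

lemma opb_val: "opb n i j x = (if x \<in> Omega n \<and> x \<noteq> i then Some (ov i j x) else None)"
  by (simp add: opb_def ov_def Let_def)

lemma dom_opb: "dom (opb n i j) = Omega n - {i}"
  by (auto simp: opb_val dom_def split: if_splits)

lemma ov_range: "i \<in> Omega n \<Longrightarrow> j \<in> Omega n \<Longrightarrow> x \<in> Omega n \<Longrightarrow> x \<noteq> i \<Longrightarrow> ov i j x \<in> Omega n \<and> ov i j x \<noteq> j"
  by (auto simp: ov_def Let_def Omega_def)

lemma ov_mono: "x \<noteq> i \<Longrightarrow> y \<noteq> i \<Longrightarrow> x < y \<Longrightarrow> ov i j x < ov i j y"
  by (auto simp: ov_def Let_def)

lemma ov_comp: "x \<noteq> i \<Longrightarrow> ov j k (ov i j x) = ov i k x"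
  by (auto simp: ov_def Let_def)

lemma ov_same: "x \<noteq> i \<Longrightarrow> ov i i x = x"
  by (auto simp: ov_def Let_def)

lemma ran_opb: assumes "i \<in> Omega n" "j \<in> Omega n" shows "ran (opb n i j) = Omega n - {j}"
proof
  show "ran (opb n i j) \<subseteq> Omega n - {j}" using ov_range[OF assms]
    by (auto simp: ran_def opb_val split: if_splits)
  show "Omega n - {j} \<subseteq> ran (opb n i j)"
  proof
    fix z assume z: "z \<in> Omega n - {j}"
    hence "z \<in> Omega n" "z \<noteq> j" by auto
    hence "ov j i z \<in> Omega n" "ov j i z \<noteq> i" using ov_range assms by auto
    moreover have "ov i j (ov j i z) = z" using ov_comp[OF \<open>z \<noteq> j\<close>] ov_same[OF \<open>z \<noteq> j\<close>] by simp
    ultimately show "z \<in> ran (opb n i j)" unfolding ran_def opb_val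
      by (metis (mono_tags, lifting) mem_Collect_eq)
  qed
qed

lemma opb_comp:
  assumes "i \<in> Omega n" "j \<in> Omega n" "k \<in> Omega n"
  shows "pcomp (opb n i j) (opb n j k) = opb n i k"
proof (rule ext)
  fix x show "pcomp (opb n i j) (opb n j k) x = opb n i k x"
    using ov_range[OF assms(1,2), of x] ov_comp[of x i j k]
    by (auto simp: pcomp_def opb_val)
qed

lemma opb_same: "opb n i i = pidS (Omega n - {i})"
  by (auto simp: fun_eq_iff opb_val pidS_def ov_same)

lemma opb_PI: assumes "i \<in> Omega n" "j \<in> Omega n" shows "opb n i j \<in> PI n"
proof -
  have "inj_on (opb n i j) (dom (opb n i j))"
  proof (rule inj_onI)
    fix x y assume "x \<in> dom (opb n i j)" "y \<in> dom (opb n i j)" "opb n i j x = opb n i j y"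
    hence "x \<noteq> i" "y \<noteq> i" "ov i j x = ov i j y" by (auto simp: dom_opb opb_val)
    thus "x = y" using ov_mono by (metis less_irrefl nat_neq_iff)
  qed
  thus ?thesis unfolding PI_def using ran_opb[OF assms] by (auto simp: dom_opb)
qed

lemma opb_sop: "sop (opb n i j)"
  unfolding sop_def by (auto simp: dom_opb opb_val ov_mono)


lemma ov_conj: assumes "i \<in> Omega n" "j \<in> Omega n" "x \<in> Omega n" "x \<noteq> n+1-i"
  shows "n + 1 - ov i j (n + 1 - x) = ov (n+1-i) (n+1-j) x"
  using assms unfolding ov_def Let_def Omega_def by (simp split: if_split) linarith?

lemma opb_conj:
  assumes "i \<in> Omega n" "j \<in> Omega n"
  shows "pcomp (pcomp (hmap n) (opb n i j)) (hmap n) = opb n (n+1-i) (n+1-j)"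
proof (rule ext)
  fix x
  show "pcomp (pcomp (hmap n) (opb n i j)) (hmap n) x = opb n (n+1-i) (n+1-j) x"
  proof (cases "x \<in> Omega n \<and> x \<noteq> n+1-i")
    case True
    hence "n+1-x \<in> Omega n" "n+1-x \<noteq> i" using assms by (auto simp: Omega_def)
    hence "ov i j (n+1-x) \<in> Omega n" using ov_range assms by blast
    thus ?thesis using True ov_conj[OF assms, of x] \<open>n+1-x \<in> Omega n\<close> \<open>n+1-x \<noteq> i\<close>
      by (simp add: pcomp_def hmap_def opb_val)
  next
    case False
    thus ?thesis using assms by (auto simp: pcomp_def hmap_def opb_val Omega_def)
  qed
qed


definition ext :: "nat \<Rightarrow> nat \<Rightarrow> nat \<Rightarrow> nat" where
  "ext i j x = (if x = i then j else ov i j x)"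

lemma ext_same: "ext i i = id"
  by (auto simp: fun_eq_iff ext_def ov_same)

lemma ext_up: "i \<le> j \<Longrightarrow> ext i (Suc j) = transpose j (Suc j) \<circ> ext i j"
  by (auto simp: fun_eq_iff ext_def ov_def Let_def transpose_def)

lemma ext_down: "j \<le> i \<Longrightarrow> ext (Suc i) j = ext i j \<circ> transpose i (Suc i)"
  by (auto simp: fun_eq_iff ext_def ov_def Let_def transpose_def)

lemma ext_up_props: "1 \<le> i \<Longrightarrow> i \<le> j \<Longrightarrow> j \<le> n \<Longrightarrow>
   ext i j permutes Omega n \<and> permutation (ext i j) \<and> (evenperm (ext i j) \<longleftrightarrow> even (i + j))"
proof (induction j)
  case 0 thus ?case by simp
next
  case (Suc j)
  show ?case
  proof (cases "i = Suc j")
    case True thus ?thesis using permutes_id[of "Omega n"] permutation_id by (simp add: ext_same id_def)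
  next
    case False
    hence ij: "i \<le> j" using Suc by simp
    have IH: "ext i j permutes Omega n" "permutation (ext i j)" "evenperm (ext i j) \<longleftrightarrow> even (i + j)"
      using Suc ij by auto
    have tp: "transpose j (Suc j) permutes Omega n" using Suc ij
      by (intro permutes_swap_id) (auto simp: Omega_def)
    have e: "evenperm (transpose j (Suc j) \<circ> ext i j) = (evenperm (transpose j (Suc j)) = evenperm (ext i j))"
      by (rule evenperm_comp[OF permutation_swap_id IH(2)])
    have o: "\<not> evenperm (transpose j (Suc j))" by (simp add: evenperm_swap)
    have "even (i + Suc j) \<longleftrightarrow> \<not> even (i + j)" by simp
    thus ?thesis unfolding ext_up[OF ij]
      using IH(3) e o permutes_compose[OF IH(1) tp] permutation_compose[OF permutation_swap_id IH(2)]
      by metis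
  qed
qed

lemma ext_down_props: "1 \<le> j \<Longrightarrow> j \<le> i \<Longrightarrow> i \<le> n \<Longrightarrow>
   ext i j permutes Omega n \<and> permutation (ext i j) \<and> (evenperm (ext i j) \<longleftrightarrow> even (i + j))"
proof (induction i)
  case 0 thus ?case by simp
next
  case (Suc i)
  show ?case
  proof (cases "j = Suc i")
    case True thus ?thesis using permutes_id[of "Omega n"] permutation_id by (simp add: ext_same id_def)
  next
    case False
    hence ij: "j \<le> i" using Suc by simp
    have IH: "ext i j permutes Omega n" "permutation (ext i j)" "evenperm (ext i j) \<longleftrightarrow> even (i + j)"
      using Suc ij by auto
    have tp: "transpose i (Suc i) permutes Omega n" using Suc ij
      by (intro permutes_swap_id) (auto simp: Omega_def)
    have e: "evenperm (ext i j \<circ> transpose i (Suc i)) = (evenperm (ext i j) = evenperm (transpose i (Suc i)))"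
      by (rule evenperm_comp[OF IH(2) permutation_swap_id])
    have o: "\<not> evenperm (transpose i (Suc i))" by (simp add: evenperm_swap)
    have "even (Suc i + j) \<longleftrightarrow> \<not> even (i + j)" by simp
    thus ?thesis unfolding ext_down[OF ij]
      using IH(3) e o permutes_compose[OF tp IH(1)] permutation_compose[OF IH(2) permutation_swap_id]
      by metis
  qed
qed

lemma ext_props: "i \<in> Omega n \<Longrightarrow> j \<in> Omega n \<Longrightarrow>
   ext i j permutes Omega n \<and> (evenperm (ext i j) \<longleftrightarrow> even (i + j))"
proof (cases "i \<le> j")
  case True
  assume "i \<in> Omega n" "j \<in> Omega n"
  thus ?thesis using ext_up_props[of i j n] True by (auto simp: Omega_def)
next
  case False
  assume "i \<in> Omega n" "j \<in> Omega n"
  thus ?thesis using ext_down_props[of j i n] False by (auto simp: Omega_def)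
qed

lemma opb_AM: assumes "i \<in> Omega n" "j \<in> Omega n" "even (i + j)" shows "opb n i j \<in> AM n"
proof -
  have "\<forall>x\<in>dom (opb n i j). opb n i j x = Some (ext i j x)"
    by (auto simp: dom_opb opb_val ext_def)
  thus ?thesis unfolding AM_def AI_def PMI_def using opb_PI[OF assms(1,2)] ext_props[OF assms(1,2)] assms(3)
    opb_sop sop_op by blast
qed

definition rvab :: "nat \<Rightarrow> nat \<Rightarrow> nat \<Rightarrow> nat" where
  "rvab a b x = (if a \<le> x \<and> x \<le> b then a + b - x else x)"

lemma rvab_props: "rvab a (a + k) permutes {a..a+k} \<and> permutation (rvab a (a+k)) \<and>
   (evenperm (rvab a (a + k)) \<longleftrightarrow> even ((k + 1) div 2))"
proof (induction k arbitrary: a rule: less_induct)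
  case (less k)
  show ?case
  proof (cases "k \<le> 1")
    case True
    then consider "k = 0" | "k = 1" by linarith
    thus ?thesis
    proof cases
      case 1
      have "rvab a (a + k) = id" using 1 by (auto simp: fun_eq_iff rvab_def)
      thus ?thesis using 1 permutes_id[of "{a..a+k}"] permutation_id by (simp add: id_def)
    next
      case 2
      have "rvab a (a + k) = transpose a (a+1)" using 2 by (auto simp: fun_eq_iff rvab_def transpose_def)
      thus ?thesis using 2 by (simp add: permutes_swap_id evenperm_swap permutation_swap_id)
    qed
  next
    case False
    then obtain m where m: "k = m + 2" by (metis add.commute le_Suc_ex nat_le_linear not_less_eq_eq one_add_one plus_1_eq_Suc)
    have IH: "rvab (a+1) (a+1+m) permutes {a+1..a+1+m}" "permutation (rvab (a+1) (a+1+m))"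
      "evenperm (rvab (a+1) (a+1+m)) \<longleftrightarrow> even ((m + 1) div 2)"
      using less[of m "a+1"] m by auto
    have eq: "rvab a (a + k) = transpose a (a+k) \<circ> rvab (a+1) (a+1+m)"
      using m by (auto simp: fun_eq_iff rvab_def transpose_def)
    have p1: "rvab (a+1) (a+1+m) permutes {a..a+k}"
      by (rule permutes_subset[OF IH(1)]) (use m in auto)
    have p2: "transpose a (a+k) permutes {a..a+k}" by (rule permutes_swap_id) auto
    have k: "even ((k + 1) div 2) \<longleftrightarrow> \<not> even ((m + 1) div 2)" using m by simp
    have e: "evenperm (transpose a (a+k) \<circ> rvab (a+1) (a+1+m)) = (evenperm (transpose a (a+k)) = evenperm (rvab (a+1) (a+1+m)))"
      by (rule evenperm_comp[OF permutation_swap_id IH(2)])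
    have o: "\<not> evenperm (transpose a (a+k))" using m by (simp add: evenperm_swap)
    show ?thesis unfolding eq using permutes_compose[OF p1 p2] permutation_compose[OF permutation_swap_id IH(2)]
        e o k IH(3) by metis
  qed
qed

lemma hmap_AM: assumes "n mod 4 = 0" "0 < n" shows "hmap n \<in> AM n"
proof -
  have r: "rvab 1 (1 + (n - 1)) permutes Omega n" "evenperm (rvab 1 (1 + (n-1)))"
    using rvab_props[of 1 "n-1"] assms by (auto simp: Omega_def)
  have "\<forall>x\<in>dom (hmap n). hmap n x = Some (rvab 1 (1 + (n-1)) x)"
    using assms by (auto simp: hmap_def rvab_def Omega_def split: if_splits)
  moreover have "hmap n \<in> PI n"
    by (auto simp: PI_def hmap_def Omega_def dom_def ran_def inj_on_def split: if_splits)
  moreover have "srev (hmap n)"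
    by (auto simp: srev_def hmap_def Omega_def dom_def split: if_splits)
  ultimately show ?thesis unfolding AM_def AI_def PMI_def using r srev_or by blast
qed



lemma ran_eq_image: "ran a = (\<lambda>x. the (a x)) ` dom a"
  by (force simp: ran_def dom_def)

lemma card_ran: "inj_on a (dom a) \<Longrightarrow> card (ran a) = card (dom a)"
proof -
  assume i: "inj_on a (dom a)"
  have "inj_on (\<lambda>x. the (a x)) (dom a)"
    using i by (smt (verit, best) domD inj_on_def option.sel)
  thus ?thesis by (simp add: ran_eq_image card_image)
qed

lemma sop_count: assumes "sop a" "x \<in> dom a"
  shows "card {z \<in> ran a. z < the (a x)} = card {y \<in> dom a. y < x}"
proof -
  have img: "{z \<in> ran a. z < the (a x)} = (\<lambda>y. the (a y)) ` {y \<in> dom a. y < x}"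
  proof
    show "{z \<in> ran a. z < the (a x)} \<subseteq> (\<lambda>y. the (a y)) ` {y \<in> dom a. y < x}"
    proof
      fix z assume "z \<in> {z \<in> ran a. z < the (a x)}"
      then obtain y where y: "y \<in> dom a" "z = the (a y)" "z < the (a x)" by (auto simp: ran_eq_image)
      have "y < x"
      proof (rule ccontr)
        assume "\<not> y < x"
        hence "x = y \<or> x < y" by auto
        thus False using assms y unfolding sop_def by force
      qed
      thus "z \<in> (\<lambda>y. the (a y)) ` {y \<in> dom a. y < x}" using y by auto
    qed
    show "(\<lambda>y. the (a y)) ` {y \<in> dom a. y < x} \<subseteq> {z \<in> ran a. z < the (a x)}"
      using assms unfolding sop_def by (auto simp: ran_eq_image)
  qed
  have "inj_on (\<lambda>y. the (a y)) {y \<in> dom a. y < x}"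
  proof (rule inj_onI)
    fix u v assume "u \<in> {y \<in> dom a. y < x}" "v \<in> {y \<in> dom a. y < x}" "the (a u) = the (a v)"
    thus "u = v" using assms(1) unfolding sop_def by (metis (no_types, lifting) mem_Collect_eq nat_neq_iff)
  qed
  thus ?thesis by (simp add: img card_image)
qed

lemma count_inj: assumes "finite R" "z1 \<in> R" "z2 \<in> R" "card {z \<in> R. z < z1} = card {z \<in> R. z < (z2::nat)}"
  shows "z1 = z2"
proof (rule ccontr)
  assume ne: "z1 \<noteq> z2"
  { fix p q :: nat assume pq: "p \<in> R" "q \<in> R" "p < q"
    have "{z \<in> R. z < p} \<subset> {z \<in> R. z < q}" using pq by auto
    hence "card {z \<in> R. z < p} < card {z \<in> R. z < q}" using assms(1) by (intro psubset_card_mono) auto }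
  note * = this
  show False using ne *[of z1 z2] *[of z2 z1] assms by (metis less_irrefl nat_neq_iff)
qed

lemma sop_unique: assumes "sop a" "sop b" "dom a = dom b" "ran a = ran b" "finite (ran a)"
  shows "a = b"
proof (rule ext)
  fix x show "a x = b x"
  proof (cases "x \<in> dom a")
    case False thus ?thesis using assms(3) by (metis domIff)
  next
    case True
    have xb: "x \<in> dom b" using True assms(3) by simp
    have "card {z \<in> ran a. z < the (a x)} = card {z \<in> ran a. z < the (b x)}"
      using sop_count[OF assms(1) True] sop_count[OF assms(2) xb] assms(3,4) by simp
    moreover have "the (a x) \<in> ran a" "the (b x) \<in> ran a" using True xb assms(4) by (auto simp: ran_eq_image)
    ultimately have "the (a x) = the (b x)" using count_inj assms(5) by blast
    thus ?thesis using True xb by (metis domD option.sel)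
  qed
qed

lemma AM_PI: "a \<in> AM n \<Longrightarrow> a \<in> PI n" by (simp add: AM_def AI_def)

lemma ran_full: assumes "a \<in> PI n" "dom a = Omega n" shows "ran a = Omega n"
proof -
  have "card (ran a) = card (dom a)" using assms(1) by (intro card_ran) (simp add: PI_def)
  hence "card (ran a) = card (Omega n)" using assms(2) by simp
  moreover have "ran a \<subseteq> Omega n" using assms by (simp add: PI_def)
  ultimately show ?thesis by (simp add: card_subset_eq)
qed

lemma pid_sop: "sop (pid n)" by (auto simp: sop_def pid_def dom_def split: if_splits)
lemma dom_pid: "dom (pid n) = Omega n" by (auto simp: pid_def dom_def split: if_splits)
lemma ran_pid: "ran (pid n) = Omega n" by (auto simp: pid_def ran_def split: if_splits)

lemma full_sop: assumes "a \<in> PI n" "dom a = Omega n" "sop a" shows "a = pid n"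
  by (rule sop_unique) (use assms ran_full[OF assms(1,2)] in \<open>auto simp: pid_sop dom_pid ran_pid\<close>)

lemma rank1_sop: assumes "a \<in> AM n" "sop a" "i \<in> Omega n" "dom a = Omega n - {i}"
  shows "\<exists>j \<in> Omega n. a = opb n i j \<and> even (i + j)"
proof -
  have PIa: "a \<in> PI n" using assms(1) by (rule AM_PI)
  have "card (ran a) = card (dom a)" using PIa by (intro card_ran) (simp add: PI_def)
  hence cr: "card (ran a) = card (Omega n) - 1" using assms(3,4) by simp
  have rs: "ran a \<subseteq> Omega n" using PIa by (simp add: PI_def)
  have "card (Omega n - ran a) = 1" using cr rs assms(3)
    by (metis One_nat_def card.infinite card_0_eq card_Diff_subset card_gt_0_iff diff_diff_cancel empty_iff finite_Omega finite_subset le_simps(3) diff_le_self)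
  then obtain j where j: "Omega n - ran a = {j}" by (rule card_1_singletonE)
  have jO: "j \<in> Omega n" using j by auto
  have ra: "ran a = Omega n - {j}" using j rs by auto
  have aeq: "a = opb n i j"
    by (rule sop_unique) (use assms ra jO in \<open>auto simp: opb_sop dom_opb ran_opb\<close>)
  obtain s where s: "s permutes Omega n" "evenperm s" "\<forall>x\<in>dom a. a x = Some (s x)"
    using assms(1) by (auto simp: AM_def AI_def)
  have "s = ext i j"
  proof (rule ext)
    fix x show "s x = ext i j x"
    proof (cases "x \<in> Omega n")
      case False
      hence "s x = x" using s(1) by (simp add: permutes_not_in)
      moreover have "ext i j x = x" using False assms(3) jO
        by (auto simp: ext_def ov_def Let_def Omega_def)
      ultimately show ?thesis by simp
    next
      case True
      show ?thesis
      proof (cases "x = i")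
        case False
        hence "x \<in> dom a" using True assms(4) by simp
        hence "a x = Some (s x)" using s(3) by simp
        moreover have "a x = Some (ov i j x)" using aeq True False by (simp add: opb_val)
        ultimately show ?thesis using False by (simp add: ext_def)
      next
        case xi: True
        have "s i \<in> Omega n" using s(1) assms(3) by (simp add: permutes_in_image)
        moreover have "s i \<notin> ran a"
        proof
          assume "s i \<in> ran a"
          then obtain y where "a y = Some (s i)" by (auto simp: ran_def)
          hence yd: "y \<in> dom a" by auto
          hence "s y = s i" using s(3) \<open>a y = Some (s i)\<close> by (metis option.inject)
          note yd this
          hence "y = i" using s(1) by (metis permutes_inj inj_eq)
          thus False using \<open>y \<in> dom a\<close> assms(4) by simp
        qed
        ultimately have "s i = j" using j by auto
        thus ?thesis using xi by (simp add: ext_def)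
      qed
    qed
  qed
  hence "even (i + j)" using s(2) ext_props[OF assms(3) jO] by simp
  thus ?thesis using aeq jO by blast
qed



lemma move_exists:
  assumes A: "A \<subseteq> Omega n" "card A + 2 \<le> n" "A \<noteq> {1..card A}"
  shows "\<exists>p. p \<in> Omega n \<and> p + 2 \<le> n \<and> p \<notin> A \<and> (p + 1 \<in> A \<or> p + 2 \<in> A)"
proof -
  have fA: "finite A" using A(1) finite_subset finite_Omega by metis
  have "Omega n - A \<noteq> {}"
  proof
    assume "Omega n - A = {}"
    hence "A = Omega n" using A(1) by blast
    thus False using A(2) by (simp add: Omega_def)
  qed
  define s where "s = Min (Omega n - A)"
  have s: "s \<in> Omega n" "s \<notin> A" using Min_in[OF _ \<open>Omega n - A \<noteq> {}\<close>] s_def by auto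
  have below: "\<And>x. 1 \<le> x \<Longrightarrow> x < s \<Longrightarrow> x \<in> A"
  proof -
    fix x assume "1 \<le> x" "x < s"
    hence "x \<in> Omega n" using s by (auto simp: Omega_def)
    moreover have "x \<notin> Omega n - A"
    proof
      assume "x \<in> Omega n - A"
      hence "s \<le> x" unfolding s_def by (intro Min_le) auto
      thus False using \<open>x < s\<close> by simp
    qed
    ultimately show "x \<in> A" by blast
  qed
  have "{a \<in> A. s < a} \<noteq> {}"
  proof
    assume e: "{a \<in> A. s < a} = {}"
    have "A = {1..s-1}"
    proof
      show "A \<subseteq> {1..s-1}"
      proof
        fix a assume "a \<in> A"
        hence "a \<in> Omega n" "\<not> s < a" "a \<noteq> s" using e A(1) s by auto
        thus "a \<in> {1..s-1}" by (auto simp: Omega_def)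
      qed
      show "{1..s-1} \<subseteq> A" using below s by (auto simp: Omega_def)
    qed
    hence "card A = s - 1" by simp
    thus False using A(3) \<open>A = {1..s-1}\<close> by simp
  qed
  define y where "y = Min {a \<in> A. s < a}"
  have y: "y \<in> A" "s < y" using Min_in[OF _ \<open>{a \<in> A. s < a} \<noteq> {}\<close>] fA y_def by auto
  have gap: "\<And>x. s \<le> x \<Longrightarrow> x < y \<Longrightarrow> x \<notin> A"
  proof -
    fix x assume "s \<le> x" "x < y"
    show "x \<notin> A"
    proof
      assume "x \<in> A"
      hence "x \<noteq> s" using s by auto
      hence "x \<in> {a \<in> A. s < a}" using \<open>x \<in> A\<close> \<open>s \<le> x\<close> by auto
      hence "y \<le> x" using Min_le fA y_def by simp
      thus False using \<open>x < y\<close> by simp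
    qed
  qed
  have yO: "y \<in> Omega n" using y A(1) by auto
  show ?thesis
  proof (cases "s + 2 \<le> y")
    case True
    have yy: "y - 2 + 2 = y" using True by simp
    have "y - 2 \<in> Omega n" "y - 2 + 2 \<le> n" "y - 2 \<notin> A" "y - 2 + 2 \<in> A"
      using True yO s gap[of "y-2"] y unfolding yy by (auto simp: Omega_def)
    thus ?thesis by blast
  next
    case False
    hence ys: "y = s + 1" using y by simp
    have "s + 2 \<le> n"
    proof (rule ccontr)
      assume "\<not> s + 2 \<le> n"
      hence "s = n - 1" using ys yO by (auto simp: Omega_def)
      hence "{1..n-2} \<union> {n} \<subseteq> A" using below ys y s by (auto simp: Omega_def)
      hence "card ({1..n-2} \<union> {n}) \<le> card A" using fA card_mono by blast
      moreover have "card ({1..n-2} \<union> {n}) = n - 1"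
      proof -
        have "n \<ge> 2" using \<open>s = n - 1\<close> s by (auto simp: Omega_def)
        moreover have "n \<notin> {1..n-2}" using calculation by simp
        ultimately show ?thesis by simp
      qed
      ultimately show False using A(2) by simp
    qed
    thus ?thesis using s ys y by auto
  qed
qed


lemma ov_move_le: "x \<noteq> p \<Longrightarrow> ov p (p+2) x \<le> x" by (auto simp: ov_def Let_def)
lemma ov_move_lt: "x = p + 1 \<or> x = p + 2 \<Longrightarrow> ov p (p+2) x < x" by (auto simp: ov_def Let_def)

lemma move_props:
  assumes "A \<subseteq> Omega n" "p \<in> Omega n" "p + 2 \<le> n" "p \<notin> A" "p + 1 \<in> A \<or> p + 2 \<in> A"
  shows "ov p (p+2) ` A \<subseteq> Omega n - {p+2}" "card (ov p (p+2) ` A) = card A"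
    "sum id (ov p (p+2) ` A) < sum id A"
proof -
  have q: "p + 2 \<in> Omega n" using assms by (auto simp: Omega_def)
  show "ov p (p+2) ` A \<subseteq> Omega n - {p+2}"
  proof
    fix z assume "z \<in> ov p (p+2) ` A"
    then obtain x where x: "x \<in> A" "z = ov p (p+2) x" by blast
    have xo: "x \<in> Omega n" "x \<noteq> p" using x assms(1,4) by auto
    show "z \<in> Omega n - {p+2}" using ov_range[OF assms(2) q xo] x(2) by simp
  qed
  have inj: "inj_on (ov p (p+2)) A"
  proof (rule inj_onI)
    fix x y assume xy: "x \<in> A" "y \<in> A" "ov p (p + 2) x = ov p (p + 2) y"
    hence "x \<noteq> p" "y \<noteq> p" using assms(4) by auto
    show "x = y"
    proof (rule ccontr)
      assume "x \<noteq> y"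
      hence "x < y \<or> y < x" by linarith
      thus False using ov_mono[OF \<open>x \<noteq> p\<close> \<open>y \<noteq> p\<close>, of "p+2"] ov_mono[OF \<open>y \<noteq> p\<close> \<open>x \<noteq> p\<close>, of "p+2"] xy(3) by auto
    qed
  qed
  show "card (ov p (p+2) ` A) = card A" using inj by (rule card_image)
  have fA: "finite A" using assms(1) finite_subset finite_Omega by blast
  have "sum id (ov p (p+2) ` A) = sum (id \<circ> ov p (p+2)) A" using inj by (rule sum.reindex)
  also have "\<dots> = sum (ov p (p+2)) A" by simp
  also have "\<dots> < sum id A"
  proof (rule sum_strict_mono_ex1[OF fA])
    show "\<forall>x\<in>A. ov p (p + 2) x \<le> id x"
    proof
      fix x assume "x \<in> A"
      hence "x \<noteq> p" using assms(4) by auto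
      thus "ov p (p + 2) x \<le> id x" using ov_move_le[of x p] by simp
    qed
    show "\<exists>a\<in>A. ov p (p + 2) a < id a" using assms(5) ov_move_lt by auto
  qed
  finally show "sum id (ov p (p+2) ` A) < sum id A" .
qed


lemma pidS_pcomp: "pcomp (pidS A) (pidS B) = pidS (A \<inter> B)"
  by (auto simp: fun_eq_iff pcomp_def pidS_def)
lemma pidS_sop: "sop (pidS A)" by (auto simp: sop_def pidS_def dom_def split: if_splits)
lemma dom_pidS: "dom (pidS A) = A" by (auto simp: pidS_def dom_def split: if_splits)
lemma ran_pidS: "ran (pidS A) = A" by (auto simp: pidS_def ran_def split: if_splits)

lemma ov_inj: "x \<noteq> i \<Longrightarrow> y \<noteq> i \<Longrightarrow> ov i j x = ov i j y \<Longrightarrow> x = y"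
  by (metis less_irrefl nat_neq_iff ov_mono)

lemma opb_pre:
  assumes "i \<in> Omega n" "j \<in> Omega n" "A \<subseteq> Omega n - {i}" "dom t = ov i j ` A"
  shows "dom (pcomp (opb n i j) t) = A" "ran (pcomp (opb n i j) t) = ran t"
proof -
  show d: "dom (pcomp (opb n i j) t) = A"
  proof
    show "dom (pcomp (opb n i j) t) \<subseteq> A"
    proof
      fix x assume "x \<in> dom (pcomp (opb n i j) t)"
      hence x: "x \<in> Omega n" "x \<noteq> i" "ov i j x \<in> ov i j ` A" using assms(4) by (auto simp: dom_pcomp dom_opb opb_val)
      then obtain y where y: "y \<in> A" "ov i j x = ov i j y" by auto
      have "y \<noteq> i" using y assms(3) by auto
      hence "x = y" using ov_inj[OF x(2) _ y(2)] by simp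
      thus "x \<in> A" using y by simp
    qed
    show "A \<subseteq> dom (pcomp (opb n i j) t)"
      using assms(3,4) by (auto simp: dom_pcomp dom_opb opb_val)
  qed
  show "ran (pcomp (opb n i j) t) = ran t"
  proof
    show "ran (pcomp (opb n i j) t) \<subseteq> ran t" by (rule ran_pcomp)
    show "ran t \<subseteq> ran (pcomp (opb n i j) t)"
    proof
      fix z assume "z \<in> ran t"
      then obtain w where w: "t w = Some z" by (auto simp: ran_def)
      hence "w \<in> ov i j ` A" using assms(4) by auto
      then obtain x where x: "x \<in> A" "w = ov i j x" by auto
      have "opb n i j x = Some w" using x assms(3) by (auto simp: opb_val)
      hence "pcomp (opb n i j) t x = Some z" using w by (simp add: pcomp_def)
      thus "z \<in> ran (pcomp (opb n i j) t)" by (auto simp: ran_def)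
    qed
  qed
qed

lemma opb_post:
  assumes "ran t \<subseteq> Omega n - {i}"
  shows "dom (pcomp t (opb n i j)) = dom t" "ran (pcomp t (opb n i j)) = ov i j ` ran t"
proof -
  show "dom (pcomp t (opb n i j)) = dom t"
  proof
    show "dom (pcomp t (opb n i j)) \<subseteq> dom t" by (auto simp: dom_pcomp)
    show "dom t \<subseteq> dom (pcomp t (opb n i j))"
    proof
      fix x assume "x \<in> dom t"
      then obtain y where y: "t x = Some y" by auto
      hence "y \<in> Omega n - {i}" using assms by (auto simp: ran_def)
      thus "x \<in> dom (pcomp t (opb n i j))" using y \<open>x \<in> dom t\<close> by (simp add: dom_pcomp dom_opb)
    qed
  qed
  show "ran (pcomp t (opb n i j)) = ov i j ` ran t"
  proof
    show "ran (pcomp t (opb n i j)) \<subseteq> ov i j ` ran t"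
    proof
      fix z assume "z \<in> ran (pcomp t (opb n i j))"
      then obtain x where "pcomp t (opb n i j) x = Some z" by (auto simp: ran_def)
      then obtain y where y: "t x = Some y" "opb n i j y = Some z" by (auto simp: pcomp_Some)
      hence "z = ov i j y" by (auto simp: opb_val split: if_splits)
      moreover have "y \<in> ran t" using y by (auto simp: ran_def)
      ultimately show "z \<in> ov i j ` ran t" by simp
    qed
    show "ov i j ` ran t \<subseteq> ran (pcomp t (opb n i j))"
    proof
      fix z assume "z \<in> ov i j ` ran t"
      then obtain y where y: "y \<in> ran t" "z = ov i j y" by auto
      then obtain x where x: "t x = Some y" by (auto simp: ran_def)
      have "y \<in> Omega n - {i}" using y assms by auto
      hence "pcomp t (opb n i j) x = Some z" using x y by (simp add: pcomp_def opb_val)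
      thus "z \<in> ran (pcomp t (opb n i j))" by (auto simp: ran_def)
    qed
  qed
qed

lemma ov_back: "x \<noteq> p \<Longrightarrow> ov (p+2) p (ov p (p+2) x) = x"
  using ov_comp ov_same by metis

locale gT =
  fixes n :: nat and T :: "(nat \<Rightarrow> nat option) set"
  assumes cl: "\<And>a b. a \<in> T \<Longrightarrow> b \<in> T \<Longrightarrow> pcomp a b \<in> T"
    and ob: "\<And>s t. s \<in> Omega n \<Longrightarrow> t \<in> Omega n \<Longrightarrow> even (s + t) \<Longrightarrow> opb n s t \<in> T"
begin

lemma pidS_T: "D \<subseteq> Omega n \<Longrightarrow> D \<noteq> Omega n \<Longrightarrow> pidS D \<in> T"
proof (induction "card (Omega n - D)" arbitrary: D rule: less_induct)
  case less
  obtain p where p: "p \<in> Omega n" "p \<notin> D" using less.prems by blast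
  show ?case
  proof (cases "insert p D = Omega n")
    case True
    hence "D = Omega n - {p}" using p by auto
    thus ?thesis using ob[OF p(1) p(1)] by (simp add: opb_same)
  next
    case False
    have "card (Omega n - insert p D) < card (Omega n - D)"
      using p by (intro psubset_card_mono) auto
    hence "pidS (insert p D) \<in> T" using less.hyps[of "insert p D"] False less.prems p by auto
    moreover have "pidS (Omega n - {p}) \<in> T" using ob[OF p(1) p(1)] by (simp add: opb_same)
    moreover have "insert p D \<inter> (Omega n - {p}) = D" using p less.prems by auto
    ultimately have "pcomp (pidS (insert p D)) (pidS (Omega n - {p})) \<in> T" using cl by blast
    thus ?thesis unfolding pidS_pcomp using \<open>insert p D \<inter> (Omega n - {p}) = D\<close> by simp
  qed
qed

definition reach :: "nat set \<Rightarrow> nat set \<Rightarrow> bool" where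
  "reach A B = (\<exists>t\<in>T. sop t \<and> dom t = A \<and> ran t = B)"

lemma reach_id: "A \<subseteq> Omega n \<Longrightarrow> A \<noteq> Omega n \<Longrightarrow> reach A A"
  unfolding reach_def using pidS_T[of A] pidS_sop[of A] dom_pidS[of A] ran_pidS[of A] by blast

lemma init_sub: "k + 2 \<le> n \<Longrightarrow> {1..k} \<subseteq> Omega n \<and> {1..k} \<noteq> Omega n"
  by (auto simp: Omega_def)

lemma reach_down: "A \<subseteq> Omega n \<Longrightarrow> card A + 2 \<le> n \<Longrightarrow> reach A {1..card A}"
proof (induction "sum id A" arbitrary: A rule: less_induct)
  case less
  show ?case
  proof (cases "A = {1..card A}")
    case True
    thus ?thesis using reach_id init_sub less.prems by (metis (no_types))
  next
    case False
    obtain p where p: "p \<in> Omega n" "p + 2 \<le> n" "p \<notin> A" "p + 1 \<in> A \<or> p + 2 \<in> A"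
      using move_exists[OF less.prems False] by blast
    note mp = move_props[OF less.prems(1) p]
    let ?A2 = "ov p (p+2) ` A"
    have "reach ?A2 {1..card ?A2}"
      using less.hyps[OF mp(3)] mp(1,2) less.prems by auto
    then obtain t where t: "t \<in> T" "sop t" "dom t = ?A2" "ran t = {1..card A}"
      unfolding reach_def using mp(2) by auto
    have q: "p + 2 \<in> Omega n" using p by (auto simp: Omega_def)
    have e: "even (p + (p + 2))" by simp
    have AA: "A \<subseteq> Omega n - {p}" using less.prems p by auto
    have r1: "pcomp (opb n p (p+2)) t \<in> T" by (rule cl[OF ob[OF p(1) q e] t(1)])
    have r2: "sop (pcomp (opb n p (p+2)) t)" by (rule sop_pcomp[OF opb_sop t(2)])
    have r3: "dom (pcomp (opb n p (p+2)) t) = A" by (rule opb_pre(1)[OF p(1) q AA t(3)])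
    have r4: "ran (pcomp (opb n p (p+2)) t) = {1..card A}" using opb_pre(2)[OF p(1) q AA t(3)] t(4) by simp
    show ?thesis unfolding reach_def using r1 r2 r3 r4 by blast
  qed
qed

lemma reach_up: "B \<subseteq> Omega n \<Longrightarrow> card B + 2 \<le> n \<Longrightarrow> reach {1..card B} B"
proof (induction "sum id B" arbitrary: B rule: less_induct)
  case less
  show ?case
  proof (cases "B = {1..card B}")
    case True
    thus ?thesis using reach_id init_sub less.prems by (metis (no_types))
  next
    case False
    obtain p where p: "p \<in> Omega n" "p + 2 \<le> n" "p \<notin> B" "p + 1 \<in> B \<or> p + 2 \<in> B"
      using move_exists[OF less.prems False] by blast
    note mp = move_props[OF less.prems(1) p]
    let ?B2 = "ov p (p+2) ` B"
    have "reach {1..card ?B2} ?B2"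
      using less.hyps[OF mp(3)] mp(1,2) less.prems by auto
    then obtain t where t: "t \<in> T" "sop t" "dom t = {1..card B}" "ran t = ?B2"
      unfolding reach_def using mp(2) by auto
    have q: "p + 2 \<in> Omega n" using p by (auto simp: Omega_def)
    have e: "even (p + 2 + p)" by simp
    have rt: "ran t \<subseteq> Omega n - {p+2}" using t(4) mp(1) by simp
    have bk: "ov (p+2) p ` ?B2 = B"
    proof -
      have "ov (p+2) p ` ?B2 = (\<lambda>x. ov (p+2) p (ov p (p+2) x)) ` B" by (simp add: image_image)
      also have "\<dots> = id ` B"
      proof (rule image_cong)
        fix x assume "x \<in> B"
        hence "x \<noteq> p" using p(3) by auto
        thus "ov (p+2) p (ov p (p+2) x) = id x" using ov_back[of x p] by simp
      qed simp
      finally show ?thesis by simp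
    qed
    have r1: "pcomp t (opb n (p+2) p) \<in> T" by (rule cl[OF t(1) ob[OF q p(1) e]])
    have r2: "sop (pcomp t (opb n (p+2) p))" by (rule sop_pcomp[OF t(2) opb_sop])
    have r3: "dom (pcomp t (opb n (p+2) p)) = {1..card B}" using opb_post(1)[OF rt, of p] t(3) by simp
    have r4: "ran (pcomp t (opb n (p+2) p)) = B" using opb_post(2)[OF rt, of p] t(4) bk by simp
    show ?thesis unfolding reach_def using r1 r2 r3 r4 by blast
  qed
qed

lemma small_T: assumes "a \<in> PI n" "sop a" "card (dom a) + 2 \<le> n" shows "a \<in> T"
proof -
  have d: "dom a \<subseteq> Omega n" and r: "ran a \<subseteq> Omega n" using assms(1) by (auto simp: PI_def)
  have cr: "card (ran a) = card (dom a)" using assms(1) by (intro card_ran) (simp add: PI_def)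
  obtain t1 where t1: "t1 \<in> T" "sop t1" "dom t1 = dom a" "ran t1 = {1..card (dom a)}"
    using reach_down[OF d assms(3)] unfolding reach_def by blast
  obtain t2 where t2: "t2 \<in> T" "sop t2" "dom t2 = {1..card (dom a)}" "ran t2 = ran a"
    using reach_up[OF r] assms(3) cr unfolding reach_def by auto
  have dd: "dom (pcomp t1 t2) = dom a"
  proof
    show "dom (pcomp t1 t2) \<subseteq> dom a" using t1(3) by (auto simp: dom_pcomp)
    show "dom a \<subseteq> dom (pcomp t1 t2)"
    proof
      fix x assume "x \<in> dom a"
      hence "x \<in> dom t1" using t1(3) by simp
      then obtain y where y: "t1 x = Some y" by auto
      hence "y \<in> ran t1" by (auto simp: ran_def)
      thus "x \<in> dom (pcomp t1 t2)" using y t1(4) t2(3) \<open>x \<in> dom t1\<close> by (simp add: dom_pcomp)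
    qed
  qed
  have rr: "ran (pcomp t1 t2) = ran a"
  proof
    show "ran (pcomp t1 t2) \<subseteq> ran a" using ran_pcomp t2(4) by metis
    show "ran a \<subseteq> ran (pcomp t1 t2)"
    proof
      fix z assume "z \<in> ran a"
      then obtain y where y: "t2 y = Some z" using t2(4) by (auto simp: ran_def)
      hence "y \<in> ran t1" using t1(4) t2(3) by auto
      then obtain x where x: "t1 x = Some y" by (auto simp: ran_def)
      hence "pcomp t1 t2 x = Some z" using y by (simp add: pcomp_def)
      thus "z \<in> ran (pcomp t1 t2)" by (auto simp: ran_def)
    qed
  qed
  have "a = pcomp t1 t2"
    by (rule sop_unique[OF assms(2) sop_pcomp[OF t1(2) t2(2)]]) (use dd rr r finite_subset[OF r finite_Omega] in auto)
  thus ?thesis using cl[OF t1(1) t2(1)] by simp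
qed

end


locale chainT =
  fixes n m :: nat and T :: "(nat \<Rightarrow> nat option) set"
  assumes nm: "n = 2 * m" and me: "even m" and m2: "2 \<le> m"
    and cl: "\<And>a b. a \<in> T \<Longrightarrow> b \<in> T \<Longrightarrow> pcomp a b \<in> T"
    and D: "\<And>i. m + 3 \<le> i \<Longrightarrow> i \<le> n \<Longrightarrow> opb n i (i - 2) \<in> T"
    and U: "\<And>i. 1 \<le> i \<Longrightarrow> i + 2 \<le> m \<Longrightarrow> opb n i (i + 2) \<in> T"
    and P1: "opb n (m + 2) 2 \<in> T" and P2: "opb n (m + 1) 1 \<in> T"
    and Q1: "opb n m n \<in> T" and Q2: "opb n (m - 1) (n - 1) \<in> T"
begin

definition R :: "nat \<Rightarrow> nat \<Rightarrow> bool" where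
  "R i j \<longleftrightarrow> i = j \<or> opb n i j \<in> T"

lemma inO: "1 \<le> i \<Longrightarrow> i \<le> n \<Longrightarrow> i \<in> Omega n" by (simp add: Omega_def)

lemma R_trans: "i \<in> Omega n \<Longrightarrow> j \<in> Omega n \<Longrightarrow> k \<in> Omega n \<Longrightarrow> R i j \<Longrightarrow> R j k \<Longrightarrow> R i k"
  unfolding R_def using cl opb_comp by metis

lemma R_up: "1 \<le> i \<Longrightarrow> i + 2 * d \<le> m \<Longrightarrow> R i (i + 2 * d)"
proof (induction d)
  case 0 thus ?case by (simp add: R_def)
next
  case (Suc d)
  have "R i (i + 2 * d)" using Suc by simp
  moreover have "R (i + 2 * d) (i + 2 * d + 2)" unfolding R_def using U[of "i + 2*d"] Suc.prems by simp
  ultimately show ?case using R_trans[of i "i + 2*d" "i + 2*d + 2"] Suc.prems nm by (simp add: Omega_def)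
qed

lemma R_down: "m + 1 \<le> j \<Longrightarrow> j + 2 * d \<le> n \<Longrightarrow> R (j + 2 * d) j"
proof (induction d)
  case 0 thus ?case by (simp add: R_def)
next
  case (Suc d)
  have "R (j + 2 * d) j" using Suc by simp
  moreover have "R (j + 2 * d + 2) (j + 2 * d)" unfolding R_def using D[of "j + 2*d + 2"] Suc.prems by simp
  ultimately show ?case using R_trans[of "j + 2*d + 2" "j + 2*d" j] Suc.prems nm by (simp add: Omega_def)
qed

lemma R_up': "1 \<le> i \<Longrightarrow> i \<le> j \<Longrightarrow> j \<le> m \<Longrightarrow> even (i + j) \<Longrightarrow> R i j"
proof -
  assume a: "1 \<le> i" "i \<le> j" "j \<le> m" "even (i + j)"
  obtain d where "j = i + 2 * d" using a(2,4) by (metis add.commute dvd_def evenE le_Suc_ex even_add)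
  thus ?thesis using R_up a by simp
qed

lemma R_down': "m + 1 \<le> j \<Longrightarrow> j \<le> i \<Longrightarrow> i \<le> n \<Longrightarrow> even (i + j) \<Longrightarrow> R i j"
proof -
  assume a: "m + 1 \<le> j" "j \<le> i" "i \<le> n" "even (i + j)"
  obtain d where "i = j + 2 * d" using a(2,4) by (metis add.commute dvd_def evenE le_Suc_ex even_add)
  thus ?thesis using R_down a by simp
qed

definition hub :: "nat \<Rightarrow> nat" where "hub i = (if even i then 2 else 1)"

lemma to_hub: assumes "i \<in> Omega n" shows "R i (hub i)"
proof -
  have i: "1 \<le> i" "i \<le> n" using assms by (auto simp: Omega_def)
  have O: "\<And>k. 1 \<le> k \<Longrightarrow> k \<le> n \<Longrightarrow> k \<in> Omega n" by (simp add: Omega_def)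
  show ?thesis
  proof (cases "even i")
    case ev: True
    have h: "hub i = 2" using ev by (simp add: hub_def)
    have a: "R (m+2) 2" using P1 by (simp add: R_def)
    show ?thesis
    proof (cases "m + 1 \<le> i")
      case True
      have "R i (m+2)" using R_down'[of "m+2" i] True ev me i by (cases "i = m + 1") auto
      thus ?thesis using R_trans[OF O O O, of i "m+2" 2] a h i nm m2 by auto
    next
      case False
      have b: "R i m" using R_up'[of i m] False ev me i by auto
      have c: "R m n" using Q1 by (simp add: R_def)
      have d: "R n (m+2)" using R_down'[of "m+2" n] nm me m2 by auto
      have "R i n" using R_trans[OF O O O b c] i nm m2 by auto
      hence "R i (m+2)" using R_trans[OF O O O _ d] i nm m2 by auto
      thus ?thesis using R_trans[OF O O O _ a] h i nm m2 by auto
    qed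
  next
    case od: False
    have h: "hub i = 1" using od by (simp add: hub_def)
    have a: "R (m+1) 1" using P2 by (simp add: R_def)
    show ?thesis
    proof (cases "m + 1 \<le> i")
      case True
      have "R i (m+1)" using R_down'[of "m+1" i] True od me i by auto
      thus ?thesis using R_trans[OF O O O, of i "m+1" 1] a h i nm m2 by auto
    next
      case False
      have b: "R i (m-1)" using R_up'[of i "m-1"] False od me i by (cases "i = m") auto
      have c: "R (m-1) (n-1)" using Q2 by (simp add: R_def)
      have d: "R (n-1) (m+1)" using R_down'[of "m+1" "n-1"] nm me m2 by auto
      have "R i (n-1)" using R_trans[OF O O O b c] i nm m2 by auto
      hence "R i (m+1)" using R_trans[OF O O O _ d] i nm m2 by auto
      thus ?thesis using R_trans[OF O O O _ a] h i nm m2 by auto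
    qed
  qed
qed

lemma from_hub: assumes "j \<in> Omega n" shows "R (hub j) j"
proof -
  have j: "1 \<le> j" "j \<le> n" using assms by (auto simp: Omega_def)
  have O: "\<And>k. 1 \<le> k \<Longrightarrow> k \<le> n \<Longrightarrow> k \<in> Omega n" by (simp add: Omega_def)
  show ?thesis
  proof (cases "even j")
    case ev: True
    have h: "hub j = 2" using ev by (simp add: hub_def)
    show ?thesis
    proof (cases "j \<le> m")
      case True
      have "R 2 j" using R_up'[of 2 j] True ev j by (cases "j = 0") auto
      thus ?thesis using h by simp
    next
      case False
      have b: "R 2 m" using R_up'[of 2 m] me m2 by auto
      have c: "R m n" using Q1 by (simp add: R_def)
      have d: "R n j" using R_down'[of j n] False ev nm j by auto
      have "R 2 n" using R_trans[OF O O O b c] nm m2 by auto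
      hence "R 2 j" using R_trans[OF O O O _ d] j nm m2 by auto
      thus ?thesis using h by simp
    qed
  next
    case od: False
    have h: "hub j = 1" using od by (simp add: hub_def)
    show ?thesis
    proof (cases "j \<le> m")
      case True
      have "R 1 j" using R_up'[of 1 j] True od j by auto
      thus ?thesis using h by simp
    next
      case False
      have b: "R 1 (m-1)" using R_up'[of 1 "m-1"] me m2 by auto
      have c: "R (m-1) (n-1)" using Q2 by (simp add: R_def)
      have "j \<noteq> n" using od nm by auto
      hence "j \<le> n - 1" using j by simp
      hence d: "R (n-1) j" using R_down'[of j "n-1"] False od nm j me by auto
      have "R 1 (n-1)" using R_trans[OF O O O b c] nm m2 by auto
      hence "R 1 j" using R_trans[OF O O O _ d] j nm m2 by auto
      thus ?thesis using h by simp
    qed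
  qed
qed

lemma all_opb: assumes "i \<in> Omega n" "j \<in> Omega n" "even (i + j)" shows "opb n i j \<in> T"
proof -
  have hO: "\<And>k. hub k \<in> Omega n" using nm m2 by (simp add: hub_def Omega_def)
  have hh: "hub i = hub j" using assms(3) by (simp add: hub_def)
  have Rij: "\<And>i j. i \<in> Omega n \<Longrightarrow> j \<in> Omega n \<Longrightarrow> even (i + j) \<Longrightarrow> R i j"
  proof -
    fix i j :: nat assume a: "i \<in> Omega n" "j \<in> Omega n" "even (i + j)"
    have "hub i = hub j" using a(3) by (simp add: hub_def)
    thus "R i j" using R_trans[OF a(1) hO a(2) to_hub[OF a(1)]] from_hub[OF a(2)] by simp
  qed
  show ?thesis
  proof (cases "i = j")
    case False thus ?thesis using Rij[OF assms] by (simp add: R_def)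
  next
    case True
    define k where "k = (if i \<le> 2 then i + 2 else i - 2)"
    have i: "1 \<le> i" "i \<le> n" using assms by (auto simp: Omega_def)
    have k: "k \<in> Omega n" "k \<noteq> i" "even (i + k)" using i nm m2 by (auto simp: k_def Omega_def)
    have "opb n i k \<in> T" "opb n k i \<in> T" using Rij[OF assms(1) k(1) k(3)] Rij[OF k(1) assms(1)] k(2,3)
      by (auto simp: R_def add.commute)
    hence "pcomp (opb n i k) (opb n k i) \<in> T" using cl by blast
    thus ?thesis using opb_comp[OF assms(1) k(1) assms(1)] True by simp
  qed
qed

end


lemma foldl_pcomp: "foldl pcomp (pcomp a b) xs = pcomp a (foldl pcomp b xs)"
  by (induction xs arbitrary: b) (simp_all add: pcomp_assoc)

lemma lprod_Cons: assumes "dom x \<subseteq> Omega n" "ran x \<subseteq> Omega n"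
  shows "lprod n (x # xs) = pcomp x (lprod n xs)"
proof -
  have "lprod n (x # xs) = foldl pcomp (pcomp (pid n) x) xs" by (simp add: lprod_def)
  also have "\<dots> = foldl pcomp (pcomp x (pid n)) xs" using pcomp_pid_left[OF assms(1)] pcomp_pid_right[OF assms(2)] by simp
  also have "\<dots> = pcomp x (lprod n xs)" by (simp add: foldl_pcomp lprod_def)
  finally show ?thesis .
qed

lemma lprod_Nil: "lprod n [] = pid n" by (simp add: lprod_def)

lemma xgen_ge3: "3 \<le> i \<Longrightarrow> xgen n i = opb n i (i - 2)" by (simp add: xgen_def)

lemma opb_dr: "i \<in> Omega n \<Longrightarrow> j \<in> Omega n \<Longrightarrow> dom (opb n i j) \<subseteq> Omega n \<and> ran (opb n i j) \<subseteq> Omega n"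
  using ran_opb dom_opb by auto

lemma chain_even: "1 \<le> k \<Longrightarrow> 2 * k + 2 \<le> n \<Longrightarrow>
  lprod n (map (\<lambda>j. xgen n (2 * j)) (rev [2..<k + 2])) = opb n (2 * k + 2) 2"
proof (induction k)
  case 0 thus ?case by simp
next
  case (Suc k)
  show ?case
  proof (cases "k = 0")
    case True
    have O: "4 \<in> Omega n" "2 \<in> Omega n" using Suc.prems True by (auto simp: Omega_def)
    show ?thesis using True opb_dr[OF O] by (simp add: lprod_Cons lprod_Nil xgen_ge3 pcomp_pid_right)
  next
    case False
    have IH: "lprod n (map (\<lambda>j. xgen n (2 * j)) (rev [2..<k + 2])) = opb n (2 * k + 2) 2"
      using Suc False by simp
    have r: "rev [2..<Suc k + 2] = (k + 2) # rev [2..<k + 2]" by simp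
    have O: "2 * k + 4 \<in> Omega n" "2 * k + 2 \<in> Omega n" "2 \<in> Omega n" using Suc.prems by (auto simp: Omega_def)
    have x0: "xgen n (2 * k + 4) = opb n (2 * k + 4) (2 * k + 2)" using xgen_ge3[of "2 * k + 4" n] by simp
    have e: "2 * (k + 2) = 2 * k + 4" by simp
    have x: "xgen n (2 * (k + 2)) = opb n (2 * k + 4) (2 * k + 2)" unfolding e by (rule x0)
    have "lprod n (map (\<lambda>j. xgen n (2 * j)) (rev [2..<Suc k + 2]))
        = pcomp (opb n (2 * k + 4) (2 * k + 2)) (opb n (2 * k + 2) 2)"
      unfolding r using opb_dr[OF O(1,2)] IH x by (simp add: lprod_Cons)
    also have "\<dots> = opb n (2 * Suc k + 2) 2"
    proof -
      have e2: "2 * Suc k + 2 = 2 * k + 4" by simp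
      show ?thesis unfolding e2 by (rule opb_comp[OF O])
    qed
    finally show ?thesis .
  qed
qed

lemma chain_odd: "1 \<le> k \<Longrightarrow> 2 * k + 1 \<le> n \<Longrightarrow>
  lprod n (map (\<lambda>j. xgen n (2 * j + 1)) (rev [1..<k + 1])) = opb n (2 * k + 1) 1"
proof (induction k)
  case 0 thus ?case by simp
next
  case (Suc k)
  show ?case
  proof (cases "k = 0")
    case True
    have O: "3 \<in> Omega n" "1 \<in> Omega n" using Suc.prems True by (auto simp: Omega_def)
    show ?thesis using True opb_dr[OF O] by (simp add: lprod_Cons lprod_Nil xgen_ge3 pcomp_pid_right)
  next
    case False
    have IH: "lprod n (map (\<lambda>j. xgen n (2 * j + 1)) (rev [1..<k + 1])) = opb n (2 * k + 1) 1"
      using Suc False by simp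
    have r: "rev [1..<Suc k + 1] = (k + 1) # rev [1..<k + 1]" by simp
    have O: "2 * k + 3 \<in> Omega n" "2 * k + 1 \<in> Omega n" "1 \<in> Omega n" using Suc.prems by (auto simp: Omega_def)
    have x0: "xgen n (2 * k + 3) = opb n (2 * k + 3) (2 * k + 1)" using xgen_ge3[of "2 * k + 3" n] by simp
    have e: "2 * (k + 1) + 1 = 2 * k + 3" by simp
    have x: "xgen n (2 * (k + 1) + 1) = opb n (2 * k + 3) (2 * k + 1)" unfolding e by (rule x0)
    have "lprod n (map (\<lambda>j. xgen n (2 * j + 1)) (rev [1..<Suc k + 1]))
        = pcomp (opb n (2 * k + 3) (2 * k + 1)) (opb n (2 * k + 1) 1)"
      unfolding r using opb_dr[OF O(1,2)] IH x by (simp add: lprod_Cons)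
    also have "\<dots> = opb n (2 * Suc k + 1) 1"
    proof -
      have e2: "2 * Suc k + 1 = 2 * k + 3" by simp
      show ?thesis unfolding e2 by (rule opb_comp[OF O])
    qed
    finally show ?thesis .
  qed
qed

definition Sset :: "nat \<Rightarrow> (nat \<Rightarrow> nat option) set" where
  "Sset n = {hmap n} \<union> {xgen n i | i. n div 2 + 3 \<le> i \<and> i \<le> n}
               \<union> {lprod n (map (\<lambda>j. xgen n (2 * j)) (rev [2..<n div 4 + 2])),
                  lprod n (map (\<lambda>j. xgen n (2 * j + 1)) (rev [1..<n div 4 + 1]))}"

lemma Sset_eq: assumes "n mod 4 = 0" "0 < n"
  shows "Sset n = {hmap n} \<union> (\<lambda>i. opb n i (i - 2)) ` {n div 2 + 3..n}
     \<union> {opb n (n div 2 + 2) 2, opb n (n div 2 + 1) 1}"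
proof -
  obtain q where q: "n = 4 * q" "1 \<le> q" using assms by (metis dvd_def mod_0_imp_dvd less_one not_less_iff_gr_or_eq mult_0_right linorder_not_le)
  have n4: "n div 4 = q" "n div 2 = 2 * q" using q by auto
  have "lprod n (map (\<lambda>j. xgen n (2 * j)) (rev [2..<n div 4 + 2])) = opb n (n div 2 + 2) 2"
    using chain_even[of q n] q n4 by simp
  moreover have "lprod n (map (\<lambda>j. xgen n (2 * j + 1)) (rev [1..<n div 4 + 1])) = opb n (n div 2 + 1) 1"
    using chain_odd[of q n] q n4 by simp
  moreover have "{xgen n i | i. n div 2 + 3 \<le> i \<and> i \<le> n} = (\<lambda>i. opb n i (i - 2)) ` {n div 2 + 3..n}"
  proof -
    have "{xgen n i | i. n div 2 + 3 \<le> i \<and> i \<le> n} = xgen n ` {n div 2 + 3..n}" by auto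
    also have "\<dots> = (\<lambda>i. opb n i (i - 2)) ` {n div 2 + 3..n}" by (rule image_cong) (auto simp: xgen_ge3)
    finally show ?thesis .
  qed
  ultimately show ?thesis unfolding Sset_def by simp
qed



lemma hmap_hmap: "pcomp (hmap n) (hmap n) = pid n"
  by (auto simp: fun_eq_iff pcomp_def hmap_def pid_def Omega_def)

lemma dom_hmap: "dom (hmap n) = Omega n" by (auto simp: hmap_def dom_def split: if_splits)

lemma AM_cases: "a \<in> AM n \<Longrightarrow> sop a \<or> srev a"
  unfolding AM_def PMI_def using PI_inj op_sop or_srev by blast

context gT
begin

lemma sop_AM_T: assumes "pid n \<in> T" "a \<in> AM n" "sop a" "0 < n" shows "a \<in> T"
proof -
  have PIa: "a \<in> PI n" using assms(2) by (rule AM_PI)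
  have ds: "dom a \<subseteq> Omega n" using PIa by (simp add: PI_def)
  have cd: "card (dom a) \<le> n" using card_mono[OF finite_Omega ds] by (simp add: Omega_def)
  consider "card (dom a) + 2 \<le> n" | "card (dom a) = n" | "card (dom a) = n - 1" using cd by linarith
  thus ?thesis
  proof cases
    case 1 thus ?thesis using small_T PIa assms(3) by blast
  next
    case 2
    hence "dom a = Omega n" using ds by (simp add: card_subset_eq Omega_def)
    thus ?thesis using full_sop[OF PIa _ assms(3)] assms(1) by simp
  next
    case 3
    have "card (Omega n - dom a) = 1" using 3 ds assms(4) by (simp add: card_Diff_subset finite_subset Omega_def)
    then obtain i where i: "Omega n - dom a = {i}" by (rule card_1_singletonE)
    have iO: "i \<in> Omega n" and da: "dom a = Omega n - {i}" using i ds by auto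
    obtain j where "j \<in> Omega n" "a = opb n i j" "even (i + j)" using rank1_sop[OF assms(2,3) iO da] by blast
    thus ?thesis using ob iO by simp
  qed
qed

end

lemma AM_T: assumes "gT n T" "pid n \<in> T" "hmap n \<in> T" "n mod 4 = 0" "0 < n" "a \<in> AM n"
  shows "a \<in> T"
proof -
  interpret gT n T by (rule assms(1))
  consider "sop a" | "srev a" using AM_cases[OF assms(6)] by blast
  thus ?thesis
  proof cases
    case 1 thus ?thesis using sop_AM_T assms by blast
  next
    case 2
    have hA: "hmap n \<in> AM n" by (rule hmap_AM[OF assms(4,5)])
    have hs: "srev (hmap n)" by (auto simp: srev_def hmap_def Omega_def dom_def split: if_splits)
    have b: "pcomp a (hmap n) \<in> AM n" using AM_pcomp[OF assms(6) hA] .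
    have "sop (pcomp a (hmap n))" using srev_pcomp1[OF 2 hs] .
    hence bT: "pcomp a (hmap n) \<in> T" using sop_AM_T assms b by blast
    have "ran a \<subseteq> Omega n" using AM_PI[OF assms(6)] by (simp add: PI_def)
    hence "pcomp (pcomp a (hmap n)) (hmap n) = a"
      by (simp add: pcomp_assoc hmap_hmap pcomp_pid_right)
    thus ?thesis using cl[OF bT assms(3)] by simp
  qed
qed

lemma S_AM: assumes "n mod 4 = 0" "0 < n" shows "Sset n \<subseteq> AM n"
proof -
  have m: "even (n div 2)" "n div 2 + 2 \<le> n" using assms by auto
  have "\<And>i. i \<in> {n div 2 + 3..n} \<Longrightarrow> opb n i (i - 2) \<in> AM n"
  proof -
    fix i assume "i \<in> {n div 2 + 3..n}"
    hence "i \<in> Omega n" "i - 2 \<in> Omega n" "even (i + (i - 2))" by (auto simp: Omega_def)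
    thus "opb n i (i - 2) \<in> AM n" by (rule opb_AM)
  qed
  moreover have "opb n (n div 2 + 2) 2 \<in> AM n" using m by (intro opb_AM) (auto simp: Omega_def)
  moreover have "opb n (n div 2 + 1) 1 \<in> AM n" using m by (intro opb_AM) (auto simp: Omega_def)
  ultimately show ?thesis unfolding Sset_eq[OF assms] using hmap_AM[OF assms] by blast
qed

lemma T_chain: assumes "n mod 4 = 0" "0 < n"
  shows "chainT n (n div 2) (gen n (Sset n))"
proof -
  let ?T = "gen n (Sset n)"
  let ?m = "n div 2"
  have nm: "n = 2 * ?m" "even ?m" "2 \<le> ?m" using assms by auto
  have inS: "\<And>x. x \<in> Sset n \<Longrightarrow> x \<in> ?T" by (rule gen_base)
  have SE: "Sset n = {hmap n} \<union> (\<lambda>i. opb n i (i - 2)) ` {n div 2 + 3..n}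
     \<union> {opb n (n div 2 + 2) 2, opb n (n div 2 + 1) 1}" by (rule Sset_eq[OF assms])
  have h: "hmap n \<in> ?T" using inS[of "hmap n"] SE by simp
  have D: "\<And>i. ?m + 3 \<le> i \<Longrightarrow> i \<le> n \<Longrightarrow> opb n i (i - 2) \<in> ?T"
  proof -
    fix i assume "?m + 3 \<le> i" "i \<le> n"
    hence "opb n i (i - 2) \<in> (\<lambda>i. opb n i (i - 2)) ` {n div 2 + 3..n}" by simp
    thus "opb n i (i - 2) \<in> ?T" using inS SE by simp
  qed
  have P1: "opb n (?m + 2) 2 \<in> ?T" using inS[of "opb n (?m + 2) 2"] SE by simp
  have P2: "opb n (?m + 1) 1 \<in> ?T" using inS[of "opb n (?m + 1) 1"] SE by simp
  have conj: "\<And>i j. i \<in> Omega n \<Longrightarrow> j \<in> Omega n \<Longrightarrow> opb n i j \<in> ?T \<Longrightarrow> opb n (n+1-i) (n+1-j) \<in> ?T"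
  proof -
    fix i j assume a: "i \<in> Omega n" "j \<in> Omega n" "opb n i j \<in> ?T"
    have "pcomp (pcomp (hmap n) (opb n i j)) (hmap n) \<in> ?T" by (rule gen_comp[OF gen_comp[OF h a(3)] h])
    thus "opb n (n+1-i) (n+1-j) \<in> ?T" using opb_conj[OF a(1,2)] by simp
  qed
  have U: "\<And>i. 1 \<le> i \<Longrightarrow> i + 2 \<le> ?m \<Longrightarrow> opb n i (i + 2) \<in> ?T"
  proof -
    fix i assume i: "1 \<le> i" "i + 2 \<le> ?m"
    have a: "n + 1 - i \<in> Omega n" "n + 1 - i - 2 \<in> Omega n" using i nm by (auto simp: Omega_def)
    have "opb n (n + 1 - i) (n + 1 - i - 2) \<in> ?T" using D[of "n + 1 - i"] i nm by simp
    hence "opb n (n + 1 - (n + 1 - i)) (n + 1 - (n + 1 - i - 2)) \<in> ?T" using conj[OF a] by blast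
    moreover have "n + 1 - (n + 1 - i) = i" "n + 1 - (n + 1 - i - 2) = i + 2" using i nm by auto
    ultimately show "opb n i (i + 2) \<in> ?T" by simp
  qed
  have Q1: "opb n ?m n \<in> ?T"
  proof -
    have a: "?m + 1 \<in> Omega n" "1 \<in> Omega n" using nm by (auto simp: Omega_def)
    have "opb n (n + 1 - (?m + 1)) (n + 1 - 1) \<in> ?T" using conj[OF a P2] .
    moreover have "n + 1 - (?m + 1) = ?m" using nm by simp
    ultimately show ?thesis by simp
  qed
  have Q2: "opb n (?m - 1) (n - 1) \<in> ?T"
  proof -
    have a: "?m + 2 \<in> Omega n" "2 \<in> Omega n" using nm by (auto simp: Omega_def)
    have "opb n (n + 1 - (?m + 2)) (n + 1 - 2) \<in> ?T" using conj[OF a P1] .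
    moreover have "n + 1 - (?m + 2) = ?m - 1" "n + 1 - 2 = n - 1" using nm by auto
    ultimately show ?thesis by simp
  qed
  show ?thesis
  proof (unfold_locales)
    show "n = 2 * ?m" "even ?m" "2 \<le> ?m" using nm by auto
    show "\<And>a b. a \<in> ?T \<Longrightarrow> b \<in> ?T \<Longrightarrow> pcomp a b \<in> ?T" by (rule gen_comp)
    show "\<And>i. ?m + 3 \<le> i \<Longrightarrow> i \<le> n \<Longrightarrow> opb n i (i - 2) \<in> ?T" by (rule D)
    show "\<And>i. 1 \<le> i \<Longrightarrow> i + 2 \<le> ?m \<Longrightarrow> opb n i (i + 2) \<in> ?T" by (rule U)
  qed (rule P1, rule P2, rule Q1, rule Q2)
qed

lemma T_gT: assumes "n mod 4 = 0" "0 < n" shows "gT n (gen n (Sset n))"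
proof -
  interpret chainT n "n div 2" "gen n (Sset n)" by (rule T_chain[OF assms])
  show ?thesis
  proof (unfold_locales)
    show "\<And>a b. a \<in> gen n (Sset n) \<Longrightarrow> b \<in> gen n (Sset n) \<Longrightarrow> pcomp a b \<in> gen n (Sset n)" by (rule gen_comp)
    show "\<And>s t. s \<in> Omega n \<Longrightarrow> t \<in> Omega n \<Longrightarrow> even (s + t) \<Longrightarrow> opb n s t \<in> gen n (Sset n)" by (rule all_opb)
  qed
qed

lemma gen_S: assumes "n mod 4 = 0" "0 < n" shows "gen n (Sset n) = AM n"
proof
  show "gen n (Sset n) \<subseteq> AM n" using gen_sub_AM[OF S_AM[OF assms]] .
  show "AM n \<subseteq> gen n (Sset n)"
  proof
    fix a assume "a \<in> AM n"
    moreover have "hmap n \<in> gen n (Sset n)" using Sset_eq[OF assms] gen_base by blast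
    ultimately show "a \<in> gen n (Sset n)" using AM_T[OF T_gT[OF assms] gen_id _ assms] by blast
  qed
qed



definition hs :: "nat \<Rightarrow> nat set \<Rightarrow> nat set" where "hs n X = (\<lambda>x. n + 1 - x) ` X"

lemma hs_sub: assumes "X \<subseteq> Omega n" shows "hs n X \<subseteq> Omega n"
proof
  fix y assume "y \<in> hs n X"
  then obtain x where "x \<in> X" "y = n + 1 - x" by (auto simp: hs_def)
  moreover have "x \<in> Omega n" using calculation(1) assms by auto
  ultimately show "y \<in> Omega n" by (auto simp: Omega_def)
qed

lemma hs_hs: assumes "X \<subseteq> Omega n" shows "hs n (hs n X) = X"
proof -
  have "hs n (hs n X) = (\<lambda>x. n + 1 - (n + 1 - x)) ` X" by (simp add: hs_def image_image)
  also have "\<dots> = id ` X"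
  proof (rule image_cong)
    fix x assume "x \<in> X" hence "x \<le> n" using assms by (auto simp: Omega_def)
    thus "n + 1 - (n + 1 - x) = id x" by simp
  qed simp
  finally show ?thesis by simp
qed

lemma hs_card: assumes "X \<subseteq> Omega n" shows "card (hs n X) = card X"
proof -
  have "inj_on (\<lambda>x. n + 1 - x) X"
  proof (rule inj_onI)
    fix x y assume xy: "x \<in> X" "y \<in> X" "n + 1 - x = n + 1 - y"
    have "x \<in> Omega n" "y \<in> Omega n" using xy(1,2) assms by auto
    hence "x \<le> n" "y \<le> n" by (auto simp: Omega_def)
    thus "x = y" using xy(3) by simp
  qed
  thus ?thesis by (simp add: hs_def card_image)
qed

lemma hs_single: assumes "i \<in> Omega n" shows "hs n (Omega n - {i}) = Omega n - {n + 1 - i}"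
proof
  show "hs n (Omega n - {i}) \<subseteq> Omega n - {n + 1 - i}" using assms by (auto simp: hs_def Omega_def)
  show "Omega n - {n + 1 - i} \<subseteq> hs n (Omega n - {i})"
  proof
    fix y assume y: "y \<in> Omega n - {n + 1 - i}"
    hence "n + 1 - y \<in> Omega n - {i}" "y = n + 1 - (n + 1 - y)" using assms by (auto simp: Omega_def)
    thus "y \<in> hs n (Omega n - {i})" unfolding hs_def by blast
  qed
qed

lemma dom_pcomp_h: assumes "dom c \<subseteq> Omega n" shows "dom (pcomp (hmap n) c) = hs n (dom c)"
proof
  show "dom (pcomp (hmap n) c) \<subseteq> hs n (dom c)"
  proof
    fix x assume "x \<in> dom (pcomp (hmap n) c)"
    hence "x \<in> {x \<in> dom (hmap n). the (hmap n x) \<in> dom c}" by (simp only: dom_pcomp)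
    hence x0: "x \<in> Omega n" "the (hmap n x) \<in> dom c" unfolding dom_hmap by auto
    hence x: "x \<in> Omega n" "n + 1 - x \<in> dom c" by (auto simp: hmap_def)
    hence "x = n + 1 - (n + 1 - x)" by (simp add: Omega_def)
    thus "x \<in> hs n (dom c)" using x unfolding hs_def by blast
  qed
  show "hs n (dom c) \<subseteq> dom (pcomp (hmap n) c)"
  proof
    fix x assume "x \<in> hs n (dom c)"
    then obtain y where y: "y \<in> dom c" "x = n + 1 - y" by (auto simp: hs_def)
    hence "y \<in> Omega n" using assms by auto
    hence "x \<in> Omega n" "n + 1 - x = y" using y by (auto simp: Omega_def)
    hence "the (hmap n x) = y" by (simp add: hmap_def)
    thus "x \<in> dom (pcomp (hmap n) c)" unfolding dom_pcomp dom_hmap using y \<open>x \<in> Omega n\<close> by simp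
  qed
qed

lemma full_AM: assumes "n mod 4 = 0" "0 < n" "a \<in> AM n" "dom a = Omega n"
  shows "a = pid n \<or> a = hmap n"
proof -
  have PIa: "a \<in> PI n" using assms(3) by (rule AM_PI)
  consider "sop a" | "srev a" using AM_cases[OF assms(3)] by blast
  thus ?thesis
  proof cases
    case 1 thus ?thesis using full_sop[OF PIa assms(4)] by simp
  next
    case 2
    have hA: "hmap n \<in> AM n" by (rule hmap_AM[OF assms(1,2)])
    have hs: "srev (hmap n)" by (auto simp: srev_def hmap_def Omega_def dom_def split: if_splits)
    have b: "pcomp a (hmap n) \<in> AM n" using AM_pcomp[OF assms(3) hA] .
    have sb: "sop (pcomp a (hmap n))" using srev_pcomp1[OF 2 hs] .
    have ra: "ran a \<subseteq> Omega n" using PIa by (simp add: PI_def)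
    have "dom (pcomp a (hmap n)) = Omega n"
    proof -
      have "\<And>x. x \<in> dom a \<Longrightarrow> the (a x) \<in> Omega n" using ra by (auto simp: ran_def)
      thus ?thesis using assms(4) by (auto simp: dom_pcomp dom_hmap)
    qed
    hence e: "pcomp a (hmap n) = pid n" using full_sop[OF AM_PI[OF b] _ sb] by simp
    have "a = pcomp (pcomp a (hmap n)) (hmap n)"
      using ra by (simp add: pcomp_assoc hmap_hmap pcomp_pid_right)
    also have "\<dots> = hmap n" unfolding e by (rule pcomp_pid_left) (simp add: dom_hmap)
    finally show ?thesis by simp
  qed
qed

lemma finite_PI: "finite (PI n)"
proof -
  have "PI n \<subseteq> (\<Union>D\<in>Pow (Omega n). {m. dom m = D \<and> ran m \<subseteq> Omega n})"
    by (auto simp: PI_def)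
  moreover have "finite (\<Union>D\<in>Pow (Omega n). {m. dom m = D \<and> ran m \<subseteq> Omega n})"
    by (rule finite_UN_I) (auto intro: finite_set_of_finite_maps[OF finite_subset[OF _ finite_Omega] finite_Omega])
  ultimately show ?thesis by (rule finite_subset)
qed

lemma finite_AM: "finite (AM n)"
  by (rule finite_subset[OF _ finite_PI]) (auto simp: AM_def AI_def)



locale genA =
  fixes n :: nat and A
  assumes n4: "n mod 4 = 0" and n0: "0 < n" and AA: "A \<subseteq> AM n" and gA: "gen n A = AM n"
begin

lemma inv1: "b \<in> gen n A \<Longrightarrow> dom b = Omega n \<longrightarrow> b = pid n \<or> hmap n \<in> A"
proof (induction rule: gen.induct)
  case gen_id thus ?case by simp
next
  case (gen_base a)
  show ?case
  proof
    assume d: "dom a = Omega n"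
    have "a \<in> AM n" using AA gen_base.hyps by (rule subsetD)
    hence "a = pid n \<or> a = hmap n" using full_AM[OF n4 n0 _ d] by simp
    thus "a = pid n \<or> hmap n \<in> A" using gen_base.hyps by auto
  qed
next
  case (gen_comp a c)
  show ?case
  proof
    assume db: "dom (pcomp a c) = Omega n"
    have aA: "a \<in> AM n" and cA: "c \<in> AM n" using gen_comp.hyps gA by auto
    have da: "dom a = Omega n" using db AM_PI[OF aA] by (auto simp: dom_pcomp PI_def)
    have ra: "ran a = Omega n" using ran_full[OF AM_PI[OF aA] da] .
    have "Omega n \<subseteq> dom c"
    proof
      fix y assume "y \<in> Omega n"
      then obtain x where x: "a x = Some y" using ra by (auto simp: ran_def)
      hence "x \<in> dom a" by auto
      hence "x \<in> dom (pcomp a c)" using da db by simp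
      thus "y \<in> dom c" using x by (simp add: dom_pcomp)
    qed
    hence dc: "dom c = Omega n" using AM_PI[OF cA] by (auto simp: PI_def)
    have "a = pid n \<or> hmap n \<in> A" using gen_comp.IH(1) da by simp
    moreover have "c = pid n \<or> hmap n \<in> A" using gen_comp.IH(2) dc by simp
    moreover have "pcomp (pid n) (pid n) = pid n" by (rule pcomp_pid_left) (simp add: dom_pid)
    ultimately show "pcomp a c = pid n \<or> hmap n \<in> A" by metis
  qed
qed

lemma h_in_A: "hmap n \<in> A"
proof -
  have "hmap n \<in> gen n A" using gA hmap_AM[OF n4 n0] by simp
  moreover have "hmap n \<noteq> pid n"
  proof
    assume "hmap n = pid n"
    hence "hmap n 1 = pid n 1" by simp
    moreover have "1 \<in> Omega n" using n0 by (simp add: Omega_def)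
    ultimately have "n + 1 - 1 = 1" by (simp add: hmap_def pid_def)
    thus False using n4 n0 by auto
  qed
  moreover have "dom (hmap n) = Omega n \<longrightarrow> hmap n = pid n \<or> hmap n \<in> A" by (rule inv1[OF calculation(1)])
  ultimately show ?thesis using dom_hmap by simp
qed

lemma inv2: "b \<in> gen n A \<Longrightarrow> card (dom b) = n - 1 \<longrightarrow>
   (\<exists>a\<in>A. card (dom a) = n - 1 \<and> (dom b = dom a \<or> dom b = hs n (dom a)))"
proof (induction rule: gen.induct)
  case gen_id thus ?case using n0 by (simp add: dom_pid Omega_def)
next
  case (gen_base a) thus ?case by blast
next
  case (gen_comp a c)
  show ?case
  proof
    assume cb: "card (dom (pcomp a c)) = n - 1"
    have aA: "a \<in> AM n" and cA: "c \<in> AM n" using gen_comp.hyps gA by auto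
    have dsa: "dom a \<subseteq> Omega n" and dsc: "dom c \<subseteq> Omega n" using AM_PI[OF aA] AM_PI[OF cA] by (auto simp: PI_def)
    have sub: "dom (pcomp a c) \<subseteq> dom a" by (auto simp: dom_pcomp)
    have "card (dom (pcomp a c)) \<le> card (dom a)" using card_mono[OF finite_subset[OF dsa finite_Omega] sub] .
    moreover have "card (dom a) \<le> n" using card_mono[OF finite_Omega dsa] by (simp add: Omega_def)
    ultimately consider "card (dom a) = n - 1" | "card (dom a) = n" using cb by linarith
    thus "\<exists>a'\<in>A. card (dom a') = n - 1 \<and> (dom (pcomp a c) = dom a' \<or> dom (pcomp a c) = hs n (dom a'))"
    proof cases
      case 1
      have "dom (pcomp a c) = dom a"
        using card_subset_eq[OF finite_subset[OF dsa finite_Omega] sub] 1 cb by simp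
      thus ?thesis using gen_comp.IH(1) 1 by simp
    next
      case 2
      hence "dom a = Omega n" using dsa by (simp add: card_subset_eq Omega_def)
      hence "a = pid n \<or> a = hmap n" using full_AM[OF n4 n0 aA] by simp
      thus ?thesis
      proof
        assume "a = pid n"
        hence e: "pcomp a c = c" using pcomp_pid_left[OF dsc] by simp
        thus ?thesis using gen_comp.IH(2) cb by simp
      next
        assume "a = hmap n"
        hence e: "dom (pcomp a c) = hs n (dom c)" using dom_pcomp_h[OF dsc] by simp
        hence "card (dom c) = n - 1" using cb hs_card[OF dsc] by simp
        then obtain a' where a': "a' \<in> A" "card (dom a') = n - 1" "dom c = dom a' \<or> dom c = hs n (dom a')"
          using gen_comp.IH(2) by blast
        have "a' \<in> AM n" using AA a'(1) by (rule subsetD)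
        hence "dom a' \<subseteq> Omega n" using AM_PI by (auto simp: PI_def)
        hence "dom (pcomp a c) = hs n (dom a') \<or> dom (pcomp a c) = dom a'" using a'(3) e hs_hs by auto
        thus ?thesis using a' by blast
      qed
    qed
  qed
qed

definition g :: "(nat \<Rightarrow> nat option) \<Rightarrow> nat" where
  "g a = min (Min (Omega n - dom a)) (n + 1 - Min (Omega n - dom a))"

lemma lower: "n div 2 + 1 \<le> card A"
proof -
  define A1 where "A1 = {a \<in> A. card (dom a) = n - 1}"
  have fA: "finite A" using finite_subset[OF AA finite_AM] .
  have "{1..n div 2} \<subseteq> g ` A1"
  proof
    fix i assume i: "i \<in> {1..n div 2}"
    have iO: "i \<in> Omega n" using i by (auto simp: Omega_def)
    have "opb n i i \<in> AM n" using opb_AM[OF iO iO] by simp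
    hence "opb n i i \<in> gen n A" using gA by simp
    moreover have cd: "card (dom (opb n i i)) = n - 1" using iO by (simp add: dom_opb Omega_def)
    ultimately have "\<exists>a\<in>A. card (dom a) = n - 1 \<and> (dom (opb n i i) = dom a \<or> dom (opb n i i) = hs n (dom a))"
      using inv2 by blast
    then obtain a where a: "a \<in> A" "card (dom a) = n - 1"
      "Omega n - {i} = dom a \<or> Omega n - {i} = hs n (dom a)"
      unfolding dom_opb by blast
    have "a \<in> AM n" using AA a(1) by (rule subsetD)
    hence da: "dom a \<subseteq> Omega n" using AM_PI by (auto simp: PI_def)
    have "g a = i"
    proof (cases "Omega n - {i} = dom a")
      case True
      hence "Omega n - dom a = {i}" using iO by auto
      thus ?thesis using i by (auto simp: g_def)
    next
      case False
      hence "hs n (Omega n - {i}) = dom a" using a(3) hs_hs[OF da] by auto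
      hence "dom a = Omega n - {n + 1 - i}" using hs_single[OF iO] by simp
      moreover have "n + 1 - i \<in> Omega n" using iO by (auto simp: Omega_def)
      ultimately have "Omega n - dom a = {n + 1 - i}" by auto
      thus ?thesis using i by (auto simp: g_def)
    qed
    moreover have "a \<in> A1" using a by (simp add: A1_def)
    ultimately show "i \<in> g ` A1" by force
  qed
  hence "card {1..n div 2} \<le> card (g ` A1)" by (rule card_mono[rotated]) (simp add: A1_def fA)
  also have "\<dots> \<le> card A1" by (rule card_image_le) (simp add: A1_def fA)
  finally have c1: "n div 2 \<le> card A1" by simp
  have "card (dom (hmap n)) = n" by (simp add: dom_hmap Omega_def)
  hence "hmap n \<notin> A1" using n0 unfolding A1_def by auto
  hence "card (insert (hmap n) A1) = card A1 + 1" by (simp add: A1_def fA)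
  moreover have "insert (hmap n) A1 \<subseteq> A" using h_in_A by (auto simp: A1_def)
  ultimately have "card A1 + 1 \<le> card A" using card_mono[OF fA] by metis
  thus ?thesis using c1 by simp
qed

end



lemma card_S: assumes "n mod 4 = 0" "0 < n" shows "card (Sset n) = n div 2 + 1"
proof -
  define m where "m = n div 2"
  have mn: "n = 2 * m" "2 \<le> m" using assms by (auto simp: m_def)
  define G where "G i = (if i = m + 1 then opb n (m+1) 1 else if i = m + 2 then opb n (m+2) 2 else opb n i (i - 2))" for i
  have I: "{m+1..n} = insert (m+1) (insert (m+2) {m+3..n})" using mn by auto
  have GI: "G ` {m+3..n} = (\<lambda>i. opb n i (i - 2)) ` {m+3..n}" by (rule image_cong) (auto simp: G_def)
  have SG: "Sset n = insert (hmap n) (G ` {m+1..n})"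
    unfolding Sset_eq[OF assms] I image_insert GI by (auto simp: G_def m_def)
  have dG: "\<And>i. dom (G i) = Omega n - {i}" by (simp add: G_def dom_opb)
  have sub: "{m+1..n} \<subseteq> Omega n" using mn by (auto simp: Omega_def)
  have inj: "inj_on G {m+1..n}"
  proof (rule inj_onI)
    fix i j assume ij: "i \<in> {m+1..n}" "j \<in> {m+1..n}" "G i = G j"
    hence "Omega n - {i} = Omega n - {j}" using dG by metis
    moreover have "i \<in> Omega n" "j \<in> Omega n" using ij sub by auto
    ultimately show "i = j" by blast
  qed
  have nh: "hmap n \<notin> G ` {m+1..n}"
  proof
    assume "hmap n \<in> G ` {m+1..n}"
    then obtain i where "i \<in> {m+1..n}" "hmap n = G i" by blast
    hence "Omega n = Omega n - {i}" "i \<in> Omega n" using dG dom_hmap sub by (metis, blast)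
    thus False by blast
  qed
  have "card (Sset n) = card (G ` {m+1..n}) + 1" unfolding SG using nh by simp
  also have "\<dots> = card {m+1..n} + 1" using inj by (simp add: card_image)
  also have "\<dots> = m + 1" using mn by simp
  finally show ?thesis by (simp add: m_def)
qed

lemma lower_bound: assumes "n mod 4 = 0" "0 < n" "A \<subseteq> AM n" "gen n A = AM n"
  shows "n div 2 + 1 \<le> card A"
proof -
  interpret genA n A by (unfold_locales) (use assms in auto)
  show ?thesis by (rule lower)
qed

lemma rank_AM: assumes "n mod 4 = 0" "0 < n" shows "rank n (AM n) = n div 2 + 1"
  unfolding rank_def
proof (rule Least_equality)
  show "\<exists>A. A \<subseteq> AM n \<and> finite A \<and> card A = n div 2 + 1 \<and> gen n A = AM n"
    using S_AM[OF assms] finite_subset[OF S_AM[OF assms] finite_AM] card_S[OF assms] gen_S[OF assms] by blast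
  show "\<And>y. \<exists>A. A \<subseteq> AM n \<and> finite A \<and> card A = y \<and> gen n A = AM n \<Longrightarrow> n div 2 + 1 \<le> y"
    using lower_bound[OF assms] by blast
qed

theorem theorem5p4:
  fixes n :: nat
  assumes "n mod 4 = 0" and "0 < n"
  defines "S \<equiv> {hmap n} \<union> {xgen n i | i. n div 2 + 3 \<le> i \<and> i \<le> n}
               \<union> {lprod n (map (\<lambda>j. xgen n (2 * j)) (rev [2..<n div 4 + 2])),
                  lprod n (map (\<lambda>j. xgen n (2 * j + 1)) (rev [1..<n div 4 + 1]))}"
  shows "S \<subseteq> AM n \<and> gen n S = AM n
         \<and> (\<forall>A. A \<subseteq> AM n \<and> gen n A = AM n \<longrightarrow> card S \<le> card A)
         \<and> card S = n div 2 + 1 \<and> rank n (AM n) = n div 2 + 1"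
proof -
  have SS: "S = Sset n" unfolding S_def Sset_def by simp
  show ?thesis unfolding SS
    using S_AM[OF assms(1,2)] gen_S[OF assms(1,2)] card_S[OF assms(1,2)] lower_bound[OF assms(1,2)]
      rank_AM[OF assms(1,2)] by auto
qed

end
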